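(* For a general digraph $G=(V,A)$ with $m=|A|$ and each neighborhood $\Phi(X,k)\in\{\Phi^{\mathrm{incl}}(X,k),\Phi^{\mathrm{excl}}(X,k),\Phi^{\mathrm{sym}}(X,k)\}$, the problem \textsc{Rec Rob SP} under $\mathcal{U}(\Gamma^c)$ admits a compact mixed integer programming formulation, i.e. a MIP whose number of variables and constraints is polynomial in $|V|$ and $m$ and whose optimal value equals the optimal value of \textsc{Rec Rob SP}, with an optimal first-stage path readable from an optimal MIP solution.
   Context: Given a digraph $G=(V,A)$ with distinguished nodes $s,t$, $\Phi$ is the set of simple $s$-$t$ paths, each identified with its arc set. For $X\in\Phi$, integer $k\ge0$: $\Phi^{\mathrm{incl}}(X,k)=\{Y\in\Phi:|Y\setminus X|\le k\}$, $\Phi^{\mathrm{excl}}(X,k)=\{Y\in\Phi:|X\setminus Y|\le k\}$, $\Phi^{\mathrm{sym}}(X,k)=\{Y\in\Phi:|(Y\setminus X)\cup(X\setminus Y)|\le k\}$. Given first-stage costs $C_e\ge0$, nominal costs $\hat c_e\ge0$, deviations $\Delta_e\ge0$ and budget $\Gamma^c\ge0$, the continuous budgeted uncertainty set is $\mathcal{U}(\Gamma^c)=\{(c_e^S)_{e\in A}: c_e^S\in[\hat c_e,\hat c_e+\Delta_e],\ \sum_{e\in A}(c^S_e-\hat c_e)\le\Gamma^c\}$. \textsc{Rec Rob SP} under a scenario set $\mathbb{U}$ is $\min_{X\in\Phi}\big(\sum_{e\in X}C_e+\max_{S\in\mathbb{U}}\min_{Y\in\Phi(X,k)}\sum_{e\in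 Y}c^S_e\big)$. *)

theory Defs
  imports Complex_Main
begin

type_synonym arc = "nat \<times> nat"

definition walk_arcs :: "nat list \<Rightarrow> arc set" where
  "walk_arcs vs = set (zip vs (tl vs))"

definition is_simple_path :: "arc set \<Rightarrow> nat \<Rightarrow> nat \<Rightarrow> nat list \<Rightarrow> bool" where
  "is_simple_path A s t vs \<longleftrightarrow> vs \<noteq> [] \<and> hd vs = s \<and> last vs = t \<and> distinct vs
     \<and> walk_arcs vs \<subseteq> A"

definition Paths :: "arc set \<Rightarrow> nat \<Rightarrow> nat \<Rightarrow> arc set set" where
  "Paths A s t = {walk_arcs vs | vs. is_simple_path A s t vs}"

datatype nbh = Incl | Excl | Sym

definition Nbh :: "nbh \<Rightarrow> arc set \<Rightarrow> nat \<Rightarrow> nat \<Rightarrow> arc set \<Rightarrow> nat \<Rightarrow> arc set set" where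
  "Nbh nb A s t X k = (case nb of
      Incl \<Rightarrow> {Y \<in> Paths A s t. card (Y - X) \<le> k}
    | Excl \<Rightarrow> {Y \<in> Paths A s t. card (X - Y) \<le> k}
    | Sym  \<Rightarrow> {Y \<in> Paths A s t. card ((Y - X) \<union> (X - Y)) \<le> k})"

definition Ucont :: "arc set \<Rightarrow> (arc \<Rightarrow> real) \<Rightarrow> (arc \<Rightarrow> real) \<Rightarrow> real \<Rightarrow> (arc \<Rightarrow> real) set" where
  "Ucont A ch D G = {c. (\<forall>e\<in>A. ch e \<le> c e \<and> c e \<le> ch e + D e) \<and> (\<forall>e. e \<notin> A \<longrightarrow> c e = ch e)
       \<and> (\<Sum>e\<in>A. c e - ch e) \<le> G}"

definition rr_obj :: "nbh \<Rightarrow> arc set \<Rightarrow> nat \<Rightarrow> nat \<Rightarrow> nat \<Rightarrow> (arc \<Rightarrow> real) \<Rightarrow> (arc \<Rightarrow> real)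
    \<Rightarrow> (arc \<Rightarrow> real) \<Rightarrow> real \<Rightarrow> arc set \<Rightarrow> real" where
  "rr_obj nb A s t k C ch D G X =
     (\<Sum>e\<in>X. C e) + (SUP c \<in> Ucont A ch D G. Min ((\<lambda>Y. \<Sum>e\<in>Y. c e) ` Nbh nb A s t X k))"

definition rr_opt :: "nbh \<Rightarrow> arc set \<Rightarrow> nat \<Rightarrow> nat \<Rightarrow> nat \<Rightarrow> (arc \<Rightarrow> real) \<Rightarrow> (arc \<Rightarrow> real)
    \<Rightarrow> (arc \<Rightarrow> real) \<Rightarrow> real \<Rightarrow> real" where
  "rr_opt nb A s t k C ch D G = Min (rr_obj nb A s t k C ch D G ` Paths A s t)"

record mip =
  nvars :: nat
  ivars :: "nat set"
  mobj :: "nat \<Rightarrow> real"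
  mcons :: "((nat \<Rightarrow> real) \<times> real) list"

definition mip_val :: "mip \<Rightarrow> (nat \<Rightarrow> real) \<Rightarrow> real" where
  "mip_val M x = (\<Sum>i<nvars M. mobj M i * x i)"

definition mip_feasible :: "mip \<Rightarrow> (nat \<Rightarrow> real) \<Rightarrow> bool" where
  "mip_feasible M x \<longleftrightarrow> (\<forall>i\<in>ivars M. x i \<in> \<int>)
     \<and> (\<forall>(a, b)\<in>set (mcons M). (\<Sum>i<nvars M. a i * x i) \<le> b)"

definition mip_optimal :: "mip \<Rightarrow> (nat \<Rightarrow> real) \<Rightarrow> bool" where
  "mip_optimal M x \<longleftrightarrow> mip_feasible M x \<and> (\<forall>y. mip_feasible M y \<longrightarrow> mip_val M x \<le> mip_val M y)"

text \<open>A coefficient that is an affine function of the cost data (C, c-hat, Delta, Gamma):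
  constant, per-arc weights for C, c-hat, Delta, and a weight for Gamma.\<close>
type_synonym aff = "real \<times> (arc \<Rightarrow> real) \<times> (arc \<Rightarrow> real) \<times> (arc \<Rightarrow> real) \<times> real"

fun aff_eval :: "arc set \<Rightarrow> (arc \<Rightarrow> real) \<Rightarrow> (arc \<Rightarrow> real) \<Rightarrow> (arc \<Rightarrow> real) \<Rightarrow> real \<Rightarrow> aff \<Rightarrow> real" where
  "aff_eval A C ch D G (a0, wC, wh, wd, wg) =
     a0 + (\<Sum>e\<in>A. wC e * C e + wh e * ch e + wd e * D e) + wg * G"

text \<open>A MIP template: variable count, integer variables, objective and constraints whose
  coefficients are affine in the cost data, and an injective assignment of a (readout)
  variable to each arc; the first-stage path is read as the set of arcs whose variable is 1.\<close>
record mip_template =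
  tnvars :: nat
  tivars :: "nat set"
  tobj :: "nat \<Rightarrow> aff"
  tcons :: "((nat \<Rightarrow> aff) \<times> aff) list"
  tidx :: "arc \<Rightarrow> nat"

definition template_size :: "mip_template \<Rightarrow> nat" where
  "template_size T = tnvars T + length (tcons T)"

definition template_wf :: "arc set \<Rightarrow> mip_template \<Rightarrow> bool" where
  "template_wf A T \<longleftrightarrow> tivars T \<subseteq> {..<tnvars T} \<and> inj_on (tidx T) A
     \<and> (\<forall>e\<in>A. tidx T e < tnvars T)"

definition instantiate :: "arc set \<Rightarrow> mip_template \<Rightarrow> (arc \<Rightarrow> real) \<Rightarrow> (arc \<Rightarrow> real)
    \<Rightarrow> (arc \<Rightarrow> real) \<Rightarrow> real \<Rightarrow> mip" where
  "instantiate A T C ch D G =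
     \<lparr> nvars = tnvars T, ivars = tivars T,
       mobj = (\<lambda>i. aff_eval A C ch D G (tobj T i)),
       mcons = map (\<lambda>(a, b). (\<lambda>i. aff_eval A C ch D G (a i), aff_eval A C ch D G b)) (tcons T) \<rparr>"

definition read_path :: "arc set \<Rightarrow> mip_template \<Rightarrow> (nat \<Rightarrow> real) \<Rightarrow> arc set" where
  "read_path A T x = {e \<in> A. x (tidx T e) = 1}"

end

theory Submission
  imports Defs
begin

definition dotW :: "'v set \<Rightarrow> ('v \<Rightarrow> real) \<Rightarrow> ('v \<Rightarrow> real) \<Rightarrow> real" where
  "dotW W a x = (\<Sum>i\<in>W. a i * x i)"

definition satS :: "'v set \<Rightarrow> (('v \<Rightarrow> real) \<times> real) set \<Rightarrow> ('v \<Rightarrow> real) \<Rightarrow> bool" where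
  "satS W S x \<longleftrightarrow> (\<forall>p\<in>S. dotW W (fst p) x \<le> snd p)"

definition ncomb :: "(('v \<Rightarrow> real) \<times> real) set \<Rightarrow> (('v \<Rightarrow> real) \<times> real) set" where
  "ncomb S = {((\<lambda>i. \<Sum>s\<in>S. \<mu> s * fst s i), (\<Sum>s\<in>S. \<mu> s * snd s)) | \<mu>. \<forall>s\<in>S. 0 \<le> \<mu> s}"

lemma ncomb_sound:
  assumes "finite S" "satS W S x" "q \<in> ncomb S" "finite W"
  shows "dotW W (fst q) x \<le> snd q"
proof -
  obtain \<mu> where mu: "\<forall>s\<in>S. 0 \<le> \<mu> s" and q: "q = ((\<lambda>i. \<Sum>s\<in>S. \<mu> s * fst s i), (\<Sum>s\<in>S. \<mu> s * snd s))"
    using assms(3) unfolding ncomb_def by blast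
  have "dotW W (fst q) x = (\<Sum>i\<in>W. \<Sum>s\<in>S. \<mu> s * fst s i * x i)"
    unfolding q dotW_def by (simp add: sum_distrib_right)
  also have "\<dots> = (\<Sum>s\<in>S. \<mu> s * dotW W (fst s) x)"
    unfolding dotW_def by (subst sum.swap) (simp add: sum_distrib_left mult.assoc)
  also have "\<dots> \<le> (\<Sum>s\<in>S. \<mu> s * snd s)"
    apply (rule sum_mono)
    using assms(2) mu unfolding satS_def by (simp add: mult_left_mono)
  finally show ?thesis using q by simp
qed

lemma ncomb_trans:
  assumes "finite S" "finite T" "T \<subseteq> ncomb S" "q \<in> ncomb T"
  shows "q \<in> ncomb S"
proof -
  have "\<forall>t\<in>T. \<exists>\<mu>. (\<forall>s\<in>S. 0 \<le> \<mu> s) \<and> t = ((\<lambda>i. \<Sum>s\<in>S. \<mu> s * fst s i), (\<Sum>s\<in>S. \<mu> s * snd s))"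
    using assms(3) unfolding ncomb_def by blast
  then have "\<exists>M. \<forall>t\<in>T. (\<forall>s\<in>S. 0 \<le> M t s) \<and> t = ((\<lambda>i. \<Sum>s\<in>S. M t s * fst s i), (\<Sum>s\<in>S. M t s * snd s))"
    by (rule bchoice)
  then obtain M where M0: "\<forall>t\<in>T. (\<forall>s\<in>S. 0 \<le> M t s) \<and> t = ((\<lambda>i. \<Sum>s\<in>S. M t s * fst s i), (\<Sum>s\<in>S. M t s * snd s))"
    by blast
  have M: "(\<forall>s\<in>S. 0 \<le> M t s) \<and> t = ((\<lambda>i. \<Sum>s\<in>S. M t s * fst s i), (\<Sum>s\<in>S. M t s * snd s))" if "t\<in>T" for t
    using M0 that by blast
  obtain \<nu> where nu: "\<forall>t\<in>T. 0 \<le> \<nu> t" and q: "q = ((\<lambda>i. \<Sum>t\<in>T. \<nu> t * fst t i), (\<Sum>t\<in>T. \<nu> t * snd t))"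
    using assms(4) unfolding ncomb_def by blast
  define \<mu> where "\<mu> s = (\<Sum>t\<in>T. \<nu> t * M t s)" for s
  have Mpos: "0 \<le> M t s" if "t\<in>T" "s\<in>S" for t s using M[OF that(1), THEN conjunct1] that(2) by blast
  have Mf: "fst t = (\<lambda>i. \<Sum>s\<in>S. M t s * fst s i)" if "t\<in>T" for t
    using arg_cong[OF M[OF that, THEN conjunct2], of fst] by simp
  have Ms: "snd t = (\<Sum>s\<in>S. M t s * snd s)" if "t\<in>T" for t
    using arg_cong[OF M[OF that, THEN conjunct2], of snd] by simp
  have pos: "\<forall>s\<in>S. 0 \<le> \<mu> s" unfolding \<mu>_def using nu Mpos by (auto intro!: sum_nonneg)
  have 1: "(\<Sum>t\<in>T. \<nu> t * fst t i) = (\<Sum>s\<in>S. \<mu> s * fst s i)" for i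
  proof -
    have "(\<Sum>t\<in>T. \<nu> t * fst t i) = (\<Sum>t\<in>T. \<nu> t * (\<Sum>s\<in>S. M t s * fst s i))"
      apply (rule sum.cong, simp) using Mf by simp
    also have "\<dots> = (\<Sum>s\<in>S. \<mu> s * fst s i)"
      unfolding \<mu>_def by (simp add: sum_distrib_left sum_distrib_right mult.assoc sum.swap[of _ T S])
    finally show ?thesis .
  qed
  have 2: "(\<Sum>t\<in>T. \<nu> t * snd t) = (\<Sum>s\<in>S. \<mu> s * snd s)"
  proof -
    have "(\<Sum>t\<in>T. \<nu> t * snd t) = (\<Sum>t\<in>T. \<nu> t * (\<Sum>s\<in>S. M t s * snd s))"
      apply (rule sum.cong, simp) using Ms by simp
    also have "\<dots> = (\<Sum>s\<in>S. \<mu> s * snd s)"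
      unfolding \<mu>_def by (simp add: sum_distrib_left sum_distrib_right mult.assoc sum.swap[of _ T S])
    finally show ?thesis .
  qed
  show ?thesis unfolding ncomb_def using pos q 1 2 by auto
qed

definition comb :: "'v \<Rightarrow> ('v \<Rightarrow> real) \<times> real \<Rightarrow> ('v \<Rightarrow> real) \<times> real \<Rightarrow> ('v \<Rightarrow> real) \<times> real" where
  "comb j p q = ((\<lambda>i. (- fst q j) * fst p i + fst p j * fst q i), (- fst q j) * snd p + fst p j * snd q)"

definition elim :: "'v \<Rightarrow> (('v \<Rightarrow> real) \<times> real) set \<Rightarrow> (('v \<Rightarrow> real) \<times> real) set" where
  "elim j S = {p\<in>S. fst p j = 0} \<union> (\<lambda>(p,q). comb j p q) ` {(p,q). p\<in>S \<and> q\<in>S \<and> fst p j > 0 \<and> fst q j < 0}"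

lemma finite_elim: "finite S \<Longrightarrow> finite (elim j S)"
proof -
  assume f: "finite S"
  have "{(p,q). p\<in>S \<and> q\<in>S \<and> fst p j > 0 \<and> fst q j < 0} \<subseteq> S \<times> S" by auto
  then have "finite {(p,q). p\<in>S \<and> q\<in>S \<and> fst p j > 0 \<and> fst q j < 0}"
    using f by (meson finite_SigmaI finite_subset)
  then show ?thesis unfolding elim_def using f by auto
qed

lemma ncomb_base: "finite S \<Longrightarrow> s \<in> S \<Longrightarrow> s \<in> ncomb S"
proof -
  assume f: "finite S" and s: "s \<in> S"
  define \<mu> where "\<mu> s' = (if s' = s then 1 else (0::real))" for s'
  have gen: "(\<Sum>s'\<in>S. \<mu> s' * g s') = g s" for g :: "_ \<Rightarrow> real"
  proof -
    have "(\<Sum>s'\<in>S. \<mu> s' * g s') = (\<Sum>s'\<in>S. if s' = s then g s else 0)" by (rule sum.cong) (auto simp: \<mu>_def)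
    then show ?thesis using f s by simp
  qed
  have "(\<lambda>i. \<Sum>s'\<in>S. \<mu> s' * fst s' i) = fst s" using gen[of "\<lambda>s'. fst s' _"] by auto
  moreover have "(\<Sum>s'\<in>S. \<mu> s' * snd s') = snd s" using gen by auto
  ultimately show ?thesis unfolding ncomb_def
    by (auto intro!: exI[of _ \<mu>] simp: \<mu>_def)
qed

lemma comb_in_ncomb:
  assumes f: "finite S" and p: "p\<in>S" and q: "q\<in>S" and pj: "fst p j > 0" and qj: "fst q j < 0"
  shows "comb j p q \<in> ncomb S"
proof -
  have ne: "p \<noteq> q" using pj qj by auto
  define \<mu> where "\<mu> s = (if s = p then - fst q j else 0) + (if s = q then fst p j else 0)" for s
  have pos: "\<forall>s\<in>S. 0 \<le> \<mu> s" using pj qj by (auto simp: \<mu>_def)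
  have 1: "(\<Sum>s\<in>S. \<mu> s * g s) = (- fst q j) * g p + fst p j * g q" for g :: "_ \<Rightarrow> real"
  proof -
    have "(\<Sum>s\<in>S. \<mu> s * g s) = (\<Sum>s\<in>S. (if s = p then - fst q j * g p else 0) + (if s = q then fst p j * g q else 0))"
      using ne by (intro sum.cong) (auto simp: \<mu>_def)
    also have "\<dots> = (- fst q j) * g p + fst p j * g q" using f p q by (simp only: sum.distrib) simp
    finally show ?thesis .
  qed
  show ?thesis unfolding ncomb_def comb_def
    apply (rule CollectI, rule exI[of _ \<mu>])
    using pos 1[of "\<lambda>s. snd s"] 1[of "\<lambda>s. fst s _"] by auto
qed

lemma elim_sub: "finite S \<Longrightarrow> elim j S \<subseteq> ncomb S"
  unfolding elim_def using ncomb_base comb_in_ncomb by auto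

lemma elim_zero: "p \<in> elim j S \<Longrightarrow> fst p j = 0"
  unfolding elim_def comb_def by auto

lemma elim_pres: assumes "\<forall>p\<in>S. fst p i = 0" "p \<in> elim j S" shows "fst p i = 0"
proof -
  from assms(2) consider "p\<in>S" | pp qq where "p = comb j pp qq" "pp\<in>S" "qq\<in>S" unfolding elim_def by auto
  then show ?thesis using assms(1) by cases (auto simp: comb_def)
qed

lemma dotW_upd: "finite W \<Longrightarrow> j \<in> W \<Longrightarrow> dotW W a (x(j:=t)) = dotW W a x + a j * (t - x j)"
proof -
  assume "finite W" "j \<in> W"
  then have "dotW W a (x(j:=t)) = a j * t + (\<Sum>i\<in>W-{j}. a i * x i)"
    and "dotW W a x = a j * x j + (\<Sum>i\<in>W-{j}. a i * x i)"
    unfolding dotW_def by (simp_all add: sum.remove)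
  then show ?thesis by (simp add: algebra_simps)
qed

lemma elim_proj:
  assumes fS: "finite S" and fW: "finite W" and jW: "j \<in> W" and sat: "satS W (elim j S) x"
  shows "\<exists>t. satS W S (x(j:=t))"
proof -
  define r where "r p = snd p - dotW W (fst p) x + fst p j * x j" for p :: "('a \<Rightarrow> real) \<times> real"
  have kp: "dotW W (fst p) (x(j:=t)) \<le> snd p \<longleftrightarrow> fst p j * t \<le> r p" for p t
    using dotW_upd[OF fW jW, of "fst p" x t] unfolding r_def by (auto simp: algebra_simps)
  have key: "satS W S (x(j:=t)) \<longleftrightarrow> (\<forall>p\<in>S. fst p j * t \<le> r p)" for t
    unfolding satS_def using kp by blast
  define Pos where "Pos = {p\<in>S. fst p j > 0}"
  define Neg where "Neg = {p\<in>S. fst p j < 0}"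
  have fP: "finite Pos" "finite Neg" using fS by (auto simp: Pos_def Neg_def)
  have zero: "0 \<le> r p" if "p\<in>S" "fst p j = 0" for p
  proof -
    have "p \<in> elim j S" using that unfolding elim_def by auto
    then show ?thesis using sat that unfolding satS_def r_def by auto
  qed
  have cross: "r q / fst q j \<le> r p / fst p j" if "p\<in>Pos" "q\<in>Neg" for p q
  proof -
    have pj: "fst p j > 0" "p\<in>S" and qj: "fst q j < 0" "q \<in> S" using that by (auto simp: Pos_def Neg_def)
    have "comb j p q \<in> elim j S" unfolding elim_def using pj qj by force
    then have "dotW W (fst (comb j p q)) x \<le> snd (comb j p q)" using sat unfolding satS_def by auto
    moreover have "dotW W (fst (comb j p q)) x = (- fst q j) * dotW W (fst p) x + fst p j * dotW W (fst q) x"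
    proof -
      have "dotW W (fst (comb j p q)) x = (\<Sum>i\<in>W. (- fst q j) * (fst p i * x i) + fst p j * (fst q i * x i))"
        unfolding comb_def dotW_def by (rule sum.cong) (auto simp: algebra_simps)
      then show ?thesis unfolding dotW_def by (simp only: sum.distrib sum_distrib_left)
    qed
    ultimately have "0 \<le> (- fst q j) * r p + fst p j * r q"
      unfolding r_def comb_def by (simp add: algebra_simps)
    then have "0 \<le> ((- fst q j) * r p + fst p j * r q) / (fst p j * (- fst q j))"
      using pj qj by (intro divide_nonneg_pos) (auto intro!: mult_pos_pos simp: mult_pos_neg)
    also have "\<dots> = r p / fst p j - r q / fst q j" using pj qj by (simp add: field_simps)
    finally show ?thesis by simp
  qed
  define t where "t = (if Pos = {} then (if Neg = {} then x j else Max ((\<lambda>q. r q / fst q j) ` Neg))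
                      else Min ((\<lambda>p. r p / fst p j) ` Pos))"
  have "\<forall>p\<in>S. fst p j * t \<le> r p"
  proof
    fix p assume pS: "p \<in> S"
    consider "fst p j = 0" | "fst p j > 0" | "fst p j < 0" by linarith
    then show "fst p j * t \<le> r p"
    proof cases
      case 1 then show ?thesis using zero pS by simp
    next
      case 2
      then have pP: "p \<in> Pos" using pS by (simp add: Pos_def)
      then have "t \<le> r p / fst p j" unfolding t_def using fP by auto
      then show ?thesis using 2 by (simp add: field_simps mult.commute)
    next
      case 3
      then have qN: "p \<in> Neg" using pS by (simp add: Neg_def)
      have "r p / fst p j \<le> t"
      proof (cases "Pos = {}")
        case True then show ?thesis unfolding t_def using fP qN by auto
      next
        case False
        then show ?thesis unfolding t_def using fP qN cross by (auto intro!: Min.boundedI)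
      qed
      then show ?thesis using 3 by (simp add: field_simps mult.commute)
    qed
  qed
  then show ?thesis using key by blast
qed

fun elims :: "'v list \<Rightarrow> (('v \<Rightarrow> real) \<times> real) set \<Rightarrow> (('v \<Rightarrow> real) \<times> real) set" where
  "elims [] S = S"
| "elims (j#js) S = elims js (elim j S)"

lemma finite_elims: "finite S \<Longrightarrow> finite (elims js S)"
  by (induction js arbitrary: S) (auto simp: finite_elim)

lemma elims_sub: "finite S \<Longrightarrow> elims js S \<subseteq> ncomb S"
proof (induction js arbitrary: S)
  case Nil then show ?case using ncomb_base by auto
next
  case (Cons j js)
  have "elims js (elim j S) \<subseteq> ncomb (elim j S)" using Cons.IH[OF finite_elim[OF Cons.prems]] .
  then show ?case using ncomb_trans[OF Cons.prems finite_elim[OF Cons.prems] elim_sub[OF Cons.prems]] by auto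
qed

lemma elims_zero: "p \<in> elims js S \<Longrightarrow> i \<in> set js \<Longrightarrow> fst p i = 0"
proof (induction js arbitrary: S)
  case Nil then show ?case by simp
next
  case (Cons j js)
  show ?case
  proof (cases "i \<in> set js")
    case True then show ?thesis using Cons by auto
  next
    case False
    then have "i = j" using Cons by auto
    have "\<forall>q\<in>elims js (elim j S). fst q i = 0 \<or> True" by simp
    have pres: "\<forall>q \<in> elims ks T. fst q i = 0" if "\<forall>q\<in>T. fst q i = 0" for ks T
      using that by (induction ks arbitrary: T) (auto intro: elim_pres)
    have "\<forall>q\<in>elim j S. fst q i = 0" using \<open>i = j\<close> by (auto intro: elim_zero)
    then show ?thesis using pres[of "elim j S" js] Cons.prems by auto
  qed
qed

lemma elims_pres: "\<forall>q\<in>S. fst q i = 0 \<Longrightarrow> p \<in> elims js S \<Longrightarrow> fst p i = 0"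
  by (induction js arbitrary: S) (auto intro: elim_pres)

lemma elims_proj:
  assumes "finite S" "finite W" "set js \<subseteq> W" "satS W (elims js S) x"
  shows "\<exists>x'. satS W S x' \<and> (\<forall>i. i \<notin> set js \<longrightarrow> x' i = x i)"
  using assms
proof (induction js arbitrary: S x)
  case Nil then show ?case by auto
next
  case (Cons j js)
  have "\<exists>x1. satS W (elim j S) x1 \<and> (\<forall>i. i \<notin> set js \<longrightarrow> x1 i = x i)"
    using Cons.IH[OF finite_elim[OF Cons.prems(1)] Cons.prems(2) _ Cons.prems(4)[simplified]] Cons.prems(3) by auto
  then obtain x1 where x1: "satS W (elim j S) x1" "\<forall>i. i \<notin> set js \<longrightarrow> x1 i = x i" by blast
  obtain t where "satS W S (x1(j:=t))" using elim_proj[OF Cons.prems(1,2) _ x1(1)] Cons.prems by auto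
  moreover have "\<forall>i. i\<notin>set (j#js) \<longrightarrow> (x1(j:=t)) i = x i" using x1 by auto
  ultimately show ?case by blast
qed

lemma farkas_z:
  fixes S :: "(('v \<Rightarrow> real) \<times> real) set"
  assumes fW: "finite W" and zW: "z \<in> W" and fS: "finite S"
   and supp: "\<forall>p\<in>S. \<forall>i. i \<notin> W \<longrightarrow> fst p i = 0"
   and feas: "satS W S x0"
   and down: "\<forall>x t. satS W S x \<longrightarrow> t \<le> x z \<longrightarrow> satS W S (x(z:=t))"
   and bnd: "\<forall>x. satS W S x \<longrightarrow> x z \<le> v"
  shows "\<exists>\<mu>. (\<forall>s\<in>S. 0 \<le> \<mu> s) \<and> (\<forall>i. (\<Sum>s\<in>S. \<mu> s * fst s i) = (if i = z then 1 else 0))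
            \<and> (\<Sum>s\<in>S. \<mu> s * snd s) \<le> v"
proof -
  obtain js where js: "set js = W - {z}" using finite_list[of "W - {z}"] fW by auto
  define R where "R = elims js S"
  have fR: "finite R" unfolding R_def using fS finite_elims by auto
  have RS: "R \<subseteq> ncomb S" unfolding R_def using fS elims_sub by auto
  have zeroR: "fst p i = 0" if "p \<in> R" "i \<noteq> z" for p i
  proof (cases "i \<in> W")
    case True then show ?thesis using elims_zero[of p js S i] that js unfolding R_def by auto
  next
    case False then show ?thesis using elims_pres[of S i p js] supp that unfolding R_def by auto
  qed
  have dotR: "dotW W (fst p) x = fst p z * x z" if "p \<in> R" for p x
  proof -
    have "dotW W (fst p) x = (\<Sum>i\<in>W. if i = z then fst p z * x z else 0)"
      unfolding dotW_def by (rule sum.cong) (auto simp: zeroR[OF that])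
    then show ?thesis using fW zW by simp
  qed
  have satR: "satS W R x \<longleftrightarrow> (\<forall>p\<in>R. fst p z * x z \<le> snd p)" for x
    unfolding satS_def using dotR by auto
  have soundR: "satS W R x" if "satS W S x" for x
    unfolding satS_def using ncomb_sound[OF fS that _ fW] RS by auto
  have proj: "\<exists>x'. satS W S x' \<and> x' z = x z" if "satS W R x" for x
    using elims_proj[OF fS fW _ that[unfolded R_def]] js by auto
  have anonneg: "0 \<le> fst p z" if pR: "p \<in> R" for p
  proof (rule ccontr)
    assume neg: "\<not> 0 \<le> fst p z"
    define t where "t = min (x0 z) (snd p / fst p z - 1)"
    have "satS W S (x0(z:=t))" using down feas unfolding t_def by auto
    then have "fst p z * (x0(z:=t)) z \<le> snd p" using soundR satR pR by blast
    then have "fst p z * t \<le> snd p" by simp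
    moreover have "fst p z * (snd p / fst p z - 1) \<le> fst p z * t"
      using neg unfolding t_def by (intro mult_left_mono_neg) auto
    moreover have "fst p z * (snd p / fst p z - 1) = snd p - fst p z" using neg by (simp add: field_simps)
    ultimately show False using neg by linarith
  qed
  define Pos where "Pos = {p\<in>R. fst p z > 0}"
  have fPos: "finite Pos" using fR by (simp add: Pos_def)
  have x0R: "fst p z * x0 z \<le> snd p" if "p \<in> R" for p using soundR[OF feas] satR that by auto
  have PosNE: "Pos \<noteq> {}"
  proof
    assume E: "Pos = {}"
    have "satS W R (x0(z := v+1))"
      unfolding satR
    proof
      fix p assume pR: "p \<in> R"
      have "\<not> fst p z > 0" using E pR unfolding Pos_def by blast
      then have "fst p z = 0" using anonneg[OF pR] by linarith
      then show "fst p z * (x0(z := v + 1)) z \<le> snd p" using x0R[OF pR] by simp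
    qed
    then obtain x' where "satS W S x'" "x' z = v + 1" using proj by fastforce
    then show False using bnd by fastforce
  qed
  define m where "m = Min ((\<lambda>p. snd p / fst p z) ` Pos)"
  obtain ps where ps: "ps \<in> Pos" "m = snd ps / fst ps z"
  proof -
    have ne: "(\<lambda>p. snd p / fst p z) ` Pos \<noteq> {}" using PosNE by auto
    show ?thesis using Min_in[OF finite_imageI[OF fPos] ne] that unfolding m_def by auto
  qed
  have mle: "m \<le> snd p / fst p z" if "p \<in> Pos" for p unfolding m_def using fPos that by auto
  have "satS W R (x0(z := m))"
    unfolding satR
  proof
    fix p assume pR: "p \<in> R"
    show "fst p z * (x0(z := m)) z \<le> snd p"
    proof (cases "fst p z > 0")
      case True
      then have "m \<le> snd p / fst p z" using mle pR Pos_def by auto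
      then show ?thesis using True by (simp add: field_simps mult.commute)
    next
      case False
      then have "fst p z = 0" using anonneg[OF pR] by auto
      then show ?thesis using x0R[OF pR] by simp
    qed
  qed
  then obtain x' where "satS W S x'" "x' z = m" using proj by fastforce
  then have mv: "m \<le> v" using bnd by fastforce
  have psR: "ps \<in> R" and apos: "fst ps z > 0" using ps(1) unfolding Pos_def by auto
  obtain \<mu> where mu: "\<forall>s\<in>S. 0 \<le> \<mu> s" and
    ps1: "fst ps = (\<lambda>i. \<Sum>s\<in>S. \<mu> s * fst s i)" and ps2: "snd ps = (\<Sum>s\<in>S. \<mu> s * snd s)"
    using RS psR unfolding ncomb_def by (smt (verit, best) fst_conv mem_Collect_eq snd_conv subset_iff)
  define \<mu>' where "\<mu>' s = \<mu> s / fst ps z" for s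
  have h1: "\<forall>s\<in>S. 0 \<le> \<mu>' s" using mu apos unfolding \<mu>'_def by auto
  have h2: "(\<Sum>s\<in>S. \<mu>' s * fst s i) = (if i = z then 1 else 0)" for i
  proof -
    have "(\<Sum>s\<in>S. \<mu>' s * fst s i) = fst ps i / fst ps z"
      unfolding \<mu>'_def ps1 by (simp add: sum_divide_distrib)
    then show ?thesis using zeroR[OF psR] apos by auto
  qed
  have h3: "(\<Sum>s\<in>S. \<mu>' s * snd s) = m"
    unfolding \<mu>'_def ps(2) ps2 by (simp add: sum_divide_distrib)
  show ?thesis apply (rule exI[of _ \<mu>']) using h1 h2 h3 mv by simp
qed


lemma lin_dep:
  fixes w :: "'i \<Rightarrow> 'k \<Rightarrow> real"
  assumes "finite K" "finite I" "card I > card K"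
  shows "\<exists>u. (\<exists>Y\<in>I. u Y \<noteq> 0) \<and> (\<forall>j\<in>K. (\<Sum>Y\<in>I. u Y * w Y j) = 0)"
  using assms
proof (induction K arbitrary: I w rule: finite_induct)
  case empty
  then obtain Y where "Y \<in> I" by fastforce
  then show ?case by (intro exI[of _ "\<lambda>_. 1"]) auto
next
  case (insert k K)
  show ?case
  proof (cases "\<forall>Y\<in>I. w Y k = 0")
    case True
    have "card I > card K" using insert by auto
    then obtain u where u: "\<exists>Y\<in>I. u Y \<noteq> 0" "\<forall>j\<in>K. (\<Sum>Y\<in>I. u Y * w Y j) = 0"
      using insert.IH[OF insert.prems(1)] by blast
    then show ?thesis using True by (intro exI[of _ u]) auto
  next
    case False
    then obtain Y0 where Y0: "Y0 \<in> I" "w Y0 k \<noteq> 0" by auto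
    define I' where "I' = I - {Y0}"
    have fI': "finite I'" using insert by (simp add: I'_def)
    have cI': "card I' > card K" using insert Y0 by (simp add: I'_def)
    define w' where "w' Y j = w Y j - (w Y k / w Y0 k) * w Y0 j" for Y j
    obtain u' where u': "\<exists>Y\<in>I'. u' Y \<noteq> 0" "\<forall>j\<in>K. (\<Sum>Y\<in>I'. u' Y * w' Y j) = 0"
      using insert.IH[OF fI' cI', of w'] by blast
    define u where "u Y = (if Y = Y0 then - (\<Sum>Y\<in>I'. u' Y * w Y k) / w Y0 k else u' Y)" for Y
    have split: "(\<Sum>Y\<in>I. u Y * w Y j) = u Y0 * w Y0 j + (\<Sum>Y\<in>I'. u' Y * w Y j)" for j
    proof -
      have "(\<Sum>Y\<in>I. u Y * w Y j) = u Y0 * w Y0 j + (\<Sum>Y\<in>I'. u Y * w Y j)"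
        unfolding I'_def using insert.prems(1) Y0 by (simp add: sum.remove)
      moreover have "(\<Sum>Y\<in>I'. u Y * w Y j) = (\<Sum>Y\<in>I'. u' Y * w Y j)"
        by (rule sum.cong) (auto simp: u_def I'_def)
      ultimately show ?thesis by simp
    qed
    have "\<forall>j\<in>insert k K. (\<Sum>Y\<in>I. u Y * w Y j) = 0"
    proof
      fix j assume j: "j \<in> insert k K"
      show "(\<Sum>Y\<in>I. u Y * w Y j) = 0"
      proof (cases "j = k")
        case True
        then show ?thesis unfolding split using Y0 by (simp add: u_def)
      next
        case False
        then have jK: "j \<in> K" using j by auto
        have "(\<Sum>Y\<in>I'. u' Y * w' Y j) = (\<Sum>Y\<in>I'. u' Y * w Y j) - (\<Sum>Y\<in>I'. u' Y * w Y k) * w Y0 j / w Y0 k"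
          unfolding w'_def by (simp add: algebra_simps sum_subtractf sum_distrib_left sum_divide_distrib sum_distrib_right)
        then show ?thesis unfolding split using u'(2) jK Y0 by (simp add: u_def field_simps)
      qed
    qed
    moreover have "\<exists>Y\<in>I. u Y \<noteq> 0"
    proof -
      obtain Y where "Y\<in>I'" "u' Y \<noteq> 0" using u'(1) by blast
      then have "u Y \<noteq> 0" "Y\<in>I" by (auto simp: u_def I'_def)
      then show ?thesis by blast
    qed
    ultimately show ?thesis by blast
  qed
qed

lemma affine_dep:
  fixes \<Phi> :: "'a set set"
  assumes fA: "finite A" and fP: "finite \<Phi>" and sub: "\<forall>Y\<in>\<Phi>. Y \<subseteq> A" and c: "card \<Phi> > card A + 1"
  shows "\<exists>u::'a set \<Rightarrow> real. (\<exists>Y\<in>\<Phi>. u Y \<noteq> 0) \<and> (\<Sum>Y\<in>\<Phi>. u Y) = 0 \<and> (\<forall>e. (\<Sum>Y\<in>\<Phi>. u Y * (if e \<in> Y then 1 else 0)) = 0)"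
proof -
  define K where "K = insert None (Some ` A)"
  have fK: "finite K" using fA by (simp add: K_def)
  have "card K \<le> card A + 1" unfolding K_def using fA
    by (metis card_image card_insert_le_m1 Suc_eq_plus1 inj_Some le_SucI zero_less_Suc card_insert_if
        finite_imageI le_refl)
  then have cK: "card \<Phi> > card K" using c by linarith
  define w where "w Y j = (case j of None \<Rightarrow> 1::real | Some e \<Rightarrow> (if e \<in> Y then 1 else 0))" for Y :: "'a set" and j
  obtain u where u: "\<exists>Y\<in>\<Phi>. u Y \<noteq> 0" "\<forall>j\<in>K. (\<Sum>Y\<in>\<Phi>. u Y * w Y j) = (0::real)"
    using lin_dep[OF fK fP cK, of w] by blast
  have "(\<Sum>Y\<in>\<Phi>. u Y) = 0" using u(2)[rule_format, of None] by (simp add: K_def w_def)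
  moreover have "(\<Sum>Y\<in>\<Phi>. u Y * (if e \<in> Y then 1 else 0)) = 0" for e
  proof (cases "e \<in> A")
    case True
    then show ?thesis using u(2)[rule_format, of "Some e"] by (simp add: K_def w_def)
  next
    case False
    then have "\<forall>Y\<in>\<Phi>. e \<notin> Y" using sub by auto
    then show ?thesis by simp
  qed
  ultimately show ?thesis using u(1) by blast
qed

lemma caratheodory:
  fixes \<Phi> :: "'a set set" and lam :: "'a set \<Rightarrow> real"
  assumes "finite A" "finite \<Phi>" "\<forall>Y\<in>\<Phi>. Y \<subseteq> A" "\<forall>Y\<in>\<Phi>. 0 \<le> lam Y" "(\<Sum>Y\<in>\<Phi>. lam Y) = 1"
  shows "\<exists>Q lam'. Q \<subseteq> \<Phi> \<and> card Q \<le> card A + 1 \<and> (\<forall>Y\<in>Q. 0 \<le> lam' Y) \<and> (\<Sum>Y\<in>Q. lam' Y) = 1 \<and>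
     (\<forall>e. (\<Sum>Y\<in>Q. lam' Y * (if e \<in> Y then 1 else 0)) = (\<Sum>Y\<in>\<Phi>. lam Y * (if e \<in> Y then 1 else 0)))"
  using assms
proof (induction "card \<Phi>" arbitrary: \<Phi> lam rule: less_induct)
  case less
  note fA = less.prems(1) and fP = less.prems(2) and sub = less.prems(3) and nn = less.prems(4) and s1 = less.prems(5)
  let ?ind = "\<lambda>e Y. (if e \<in> Y then 1 else 0::real)"
  show ?case
  proof (cases "card \<Phi> \<le> card A + 1")
    case True then show ?thesis using nn s1 by blast
  next
    case big: False
    have rem: "\<exists>Q lam'. Q \<subseteq> \<Phi> \<and> card Q \<le> card A + 1 \<and> (\<forall>Y\<in>Q. 0 \<le> lam' Y) \<and> (\<Sum>Y\<in>Q. lam' Y) = 1 \<and>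
     (\<forall>e. (\<Sum>Y\<in>Q. lam' Y * ?ind e Y) = (\<Sum>Y\<in>\<Phi>. lam Y * ?ind e Y))"
      if Y1: "Y1 \<in> \<Phi>" and l1: "\<mu> Y1 = 0" and mnn: "\<forall>Y\<in>\<Phi>. 0 \<le> \<mu> Y" and ms: "(\<Sum>Y\<in>\<Phi>. \<mu> Y) = 1"
        and msum: "\<forall>e. (\<Sum>Y\<in>\<Phi>. \<mu> Y * ?ind e Y) = (\<Sum>Y\<in>\<Phi>. lam Y * ?ind e Y)" for Y1 \<mu>
    proof -
      define \<Phi>' where "\<Phi>' = \<Phi> - {Y1}"
      have lt: "card \<Phi>' < card \<Phi>" unfolding \<Phi>'_def using fP Y1 by (metis card_Diff1_less)
      have s': "(\<Sum>Y\<in>\<Phi>'. \<mu> Y) = 1" using ms fP Y1 l1 unfolding \<Phi>'_def by (simp add: sum.remove)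
      have e': "(\<Sum>Y\<in>\<Phi>'. \<mu> Y * ?ind e Y) = (\<Sum>Y\<in>\<Phi>. lam Y * ?ind e Y)" for e
        using msum fP Y1 l1 unfolding \<Phi>'_def by (simp add: sum.remove)
      obtain Q lam' where Q: "Q \<subseteq> \<Phi>'" "card Q \<le> card A + 1" "\<forall>Y\<in>Q. 0 \<le> lam' Y" "(\<Sum>Y\<in>Q. lam' Y) = 1"
        "\<forall>e. (\<Sum>Y\<in>Q. lam' Y * ?ind e Y) = (\<Sum>Y\<in>\<Phi>'. \<mu> Y * ?ind e Y)"
      proof -
        have h: "finite \<Phi>'" "\<forall>Y\<in>\<Phi>'. Y \<subseteq> A" "\<forall>Y\<in>\<Phi>'. 0 \<le> \<mu> Y" using fP sub mnn unfolding \<Phi>'_def by auto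
        show ?thesis using less.hyps[OF lt fA h s'] that by blast
      qed
      show ?thesis using Q e' unfolding \<Phi>'_def by (intro exI[of _ Q] exI[of _ lam']) auto
    qed
    show ?thesis
    proof (cases "\<exists>Y\<in>\<Phi>. lam Y = 0")
      case True
      then obtain Y1 where "Y1 \<in> \<Phi>" "lam Y1 = 0" by blast
      then show ?thesis using rem[of Y1 lam] nn s1 by blast
    next
      case False
      then have pos: "\<forall>Y\<in>\<Phi>. 0 < lam Y" using nn by force
      obtain u where u: "\<exists>Y\<in>\<Phi>. u Y \<noteq> 0" "(\<Sum>Y\<in>\<Phi>. u Y) = 0" "\<forall>e. (\<Sum>Y\<in>\<Phi>. u Y * ?ind e Y) = 0"
        using affine_dep[OF fA fP sub] big by force
      define P where "P = {Y\<in>\<Phi>. u Y > 0}"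
      have PNE: "P \<noteq> {}"
      proof
        assume "P = {}"
        then have le: "\<forall>Y\<in>\<Phi>. u Y \<le> 0" unfolding P_def by force
        have "(\<Sum>Y\<in>\<Phi>. - u Y) = 0" using u(2) by (simp add: sum_negf)
        then have "\<forall>Y\<in>\<Phi>. - u Y = 0" using sum_nonneg_eq_0_iff[OF fP, of "\<lambda>Y. - u Y"] le by simp
        then have "\<forall>Y\<in>\<Phi>. u Y = 0" by simp
        then show False using u(1) by blast
      qed
      have fPP: "finite P" using fP by (simp add: P_def)
      define \<tau> where "\<tau> = Min ((\<lambda>Y. lam Y / u Y) ` P)"
      have ne: "(\<lambda>Y. lam Y / u Y) ` P \<noteq> {}" using PNE by auto
      obtain Y1 where Y1: "Y1 \<in> P" "\<tau> = lam Y1 / u Y1" using Min_in[OF finite_imageI[OF fPP] ne]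
        unfolding \<tau>_def by auto
      have tle: "\<tau> \<le> lam Y / u Y" if "Y \<in> P" for Y unfolding \<tau>_def using fPP that by auto
      have tpos: "0 \<le> \<tau>" using Y1 pos unfolding P_def by auto
      define \<mu> where "\<mu> Y = lam Y - \<tau> * u Y" for Y
      have Y1P: "Y1 \<in> \<Phi>" "u Y1 > 0" using Y1 unfolding P_def by auto
      have "\<mu> Y1 = 0" unfolding \<mu>_def using Y1 Y1P by simp
      moreover have "\<forall>Y\<in>\<Phi>. 0 \<le> \<mu> Y"
      proof
        fix Y assume Y: "Y \<in> \<Phi>"
        show "0 \<le> \<mu> Y"
        proof (cases "u Y > 0")
          case True
          then have "\<tau> \<le> lam Y / u Y" using tle Y P_def by auto
          then show ?thesis unfolding \<mu>_def using True by (simp add: field_simps)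
        next
          case False
          then have "\<tau> * u Y \<le> 0" using tpos by (simp add: mult_nonneg_nonpos)
          then show ?thesis unfolding \<mu>_def using pos Y by force
        qed
      qed
      moreover have "(\<Sum>Y\<in>\<Phi>. \<mu> Y) = 1" unfolding \<mu>_def using s1 u(2)
        by (simp add: sum_subtractf sum_distrib_left[symmetric])
      moreover have "\<forall>e. (\<Sum>Y\<in>\<Phi>. \<mu> Y * ?ind e Y) = (\<Sum>Y\<in>\<Phi>. lam Y * ?ind e Y)"
      proof
        fix e
        have "(\<Sum>Y\<in>\<Phi>. \<mu> Y * ?ind e Y) = (\<Sum>Y\<in>\<Phi>. lam Y * ?ind e Y) - \<tau> * (\<Sum>Y\<in>\<Phi>. u Y * ?ind e Y)"
          unfolding \<mu>_def by (simp add: algebra_simps sum_subtractf sum_distrib_left)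
        then show "(\<Sum>Y\<in>\<Phi>. \<mu> Y * ?ind e Y) = (\<Sum>Y\<in>\<Phi>. lam Y * ?ind e Y)" using u(3) by simp
      qed
      ultimately show ?thesis using rem[OF Y1P(1)] by blast
    qed
  qed
qed


definition ind :: "'a \<Rightarrow> 'a set \<Rightarrow> real" where "ind e Y = (if e \<in> Y then 1 else 0)"

definition mval :: "(arc \<Rightarrow> real) \<Rightarrow> arc set set \<Rightarrow> real" where
  "mval c \<Phi> = Min ((\<lambda>Y. \<Sum>e\<in>Y. c e) ` \<Phi>)"

lemma dotW_opt: "finite A \<Longrightarrow> dotW (insert None (Some ` A)) a x = a None * x None + (\<Sum>e\<in>A. a (Some e) * x (Some e))"
  unfolding dotW_def by (simp add: sum.reindex)

lemma sum_ind: "finite A \<Longrightarrow> Y \<subseteq> A \<Longrightarrow> (\<Sum>e\<in>A. ind e Y * g e) = (\<Sum>e\<in>Y. g e)"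
proof -
  assume "finite A" "Y \<subseteq> A"
  then have "(\<Sum>e\<in>A. ind e Y * g e) = (\<Sum>e\<in>A. if e \<in> Y then g e else 0)" by (intro sum.cong) (auto simp: ind_def)
  also have "\<dots> = (\<Sum>e\<in>A \<inter> Y. g e)" using \<open>finite A\<close> by (simp add: sum.inter_restrict)
  also have "A \<inter> Y = Y" using \<open>Y \<subseteq> A\<close> by auto
  finally show ?thesis .
qed

lemma mm_weak:
  assumes fA: "finite A" and fP: "finite \<Phi>" and Q: "Q \<subseteq> \<Phi>" "finite Q"
    and sub: "\<forall>Y\<in>\<Phi>. Y \<subseteq> A"
    and lnn: "\<forall>Y\<in>Q. 0 \<le> lam Y" and ls: "(\<Sum>Y\<in>Q. lam Y) = 1"
    and pnn: "0 \<le> \<pi>" and rnn: "\<forall>e\<in>A. 0 \<le> \<rho> e"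
    and cov: "\<forall>e\<in>A. (\<Sum>Y\<in>Q. lam Y * ind e Y) \<le> \<pi> + \<rho> e"
    and c: "c \<in> Ucont A ch D G"
  shows "mval c \<Phi> \<le> (\<Sum>e\<in>A. ch e * (\<Sum>Y\<in>Q. lam Y * ind e Y)) + G * \<pi> + (\<Sum>e\<in>A. D e * \<rho> e)"
proof -
  let ?y = "\<lambda>e. (\<Sum>Y\<in>Q. lam Y * ind e Y)"
  have QNE: "Q \<noteq> {}" using ls by auto
  have cb: "\<forall>e\<in>A. ch e \<le> c e \<and> c e \<le> ch e + D e" "(\<Sum>e\<in>A. c e - ch e) \<le> G"
    using c unfolding Ucont_def by auto
  have "mval c \<Phi> = (\<Sum>Y\<in>Q. lam Y * mval c \<Phi>)" using ls by (simp add: sum_distrib_right[symmetric])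
  also have "\<dots> \<le> (\<Sum>Y\<in>Q. lam Y * (\<Sum>e\<in>Y. c e))"
    apply (rule sum_mono) apply (rule mult_left_mono)
    using Q fP lnn unfolding mval_def by auto
  also have "\<dots> = (\<Sum>Y\<in>Q. lam Y * (\<Sum>e\<in>A. ind e Y * c e))"
    using sum_ind[OF fA] sub Q by (intro sum.cong) auto
  also have "\<dots> = (\<Sum>e\<in>A. \<Sum>Y\<in>Q. lam Y * ind e Y * c e)"
    by (subst sum.swap) (simp add: sum_distrib_left mult.assoc)
  also have "\<dots> = (\<Sum>e\<in>A. c e * ?y e)"
    by (simp add: sum_distrib_left mult_ac)
  also have "\<dots> = (\<Sum>e\<in>A. ch e * ?y e) + (\<Sum>e\<in>A. (c e - ch e) * ?y e)"
    by (simp add: algebra_simps sum.distrib[symmetric])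
  also have "(\<Sum>e\<in>A. (c e - ch e) * ?y e) \<le> (\<Sum>e\<in>A. (c e - ch e) * (\<pi> + \<rho> e))"
    using cb cov by (intro sum_mono mult_left_mono) auto
  also have "\<dots> = (\<Sum>e\<in>A. c e - ch e) * \<pi> + (\<Sum>e\<in>A. (c e - ch e) * \<rho> e)"
    by (simp only: distrib_left sum.distrib sum_distrib_right)
  also have "\<dots> \<le> G * \<pi> + (\<Sum>e\<in>A. D e * \<rho> e)"
    using cb pnn rnn by (intro add_mono mult_right_mono sum_mono) auto
  finally show ?thesis by simp
qed

definition vP :: "arc set \<Rightarrow> arc option \<Rightarrow> real" where
  "vP Y = (\<lambda>i. case i of None \<Rightarrow> 1 | Some e \<Rightarrow> - ind e Y)"
definition vL :: "arc \<Rightarrow> arc option \<Rightarrow> real" where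
  "vL e = (\<lambda>i. if i = Some e then -1 else 0)"
definition vU :: "arc \<Rightarrow> arc option \<Rightarrow> real" where
  "vU e = (\<lambda>i. if i = Some e then 1 else 0)"
definition vB :: "arc set \<Rightarrow> arc option \<Rightarrow> real" where
  "vB A = (\<lambda>i. case i of None \<Rightarrow> 0 | Some e \<Rightarrow> 2 * ind e A)"

definition sysS :: "arc set \<Rightarrow> arc set set \<Rightarrow> (arc \<Rightarrow> real) \<Rightarrow> (arc \<Rightarrow> real) \<Rightarrow> real \<Rightarrow> ((arc option \<Rightarrow> real) \<times> real) set" where
  "sysS A \<Phi> ch D G = (\<lambda>Y. (vP Y, 0)) ` \<Phi> \<union> (\<lambda>e. (vL e, - ch e)) ` A \<union> (\<lambda>e. (vU e, ch e + D e)) ` A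
      \<union> {(vB A, 2 * (G + (\<Sum>e\<in>A. ch e)))}"

lemma dot_vP: "finite A \<Longrightarrow> Y \<subseteq> A \<Longrightarrow> dotW (insert None (Some ` A)) (vP Y) x = x None - (\<Sum>e\<in>Y. x (Some e))"
proof -
  assume fA: "finite A" and Y: "Y \<subseteq> A"
  have "(\<Sum>e\<in>A. - ind e Y * x (Some e)) = - (\<Sum>e\<in>A. ind e Y * x (Some e))" by (simp add: sum_negf)
  then show ?thesis unfolding dotW_opt[OF fA] vP_def using sum_ind[OF fA Y] by simp
qed

lemma dot_vL: "finite A \<Longrightarrow> e \<in> A \<Longrightarrow> dotW (insert None (Some ` A)) (vL e) x = - x (Some e)"
proof -
  assume fA: "finite A" and e: "e \<in> A"
  have "(\<Sum>e'\<in>A. (if Some e' = Some e then -1 else 0) * x (Some e')) = (\<Sum>e'\<in>A. if e' = e then - x (Some e) else 0)"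
    by (rule sum.cong) auto
  then show ?thesis unfolding dotW_opt[OF fA] vL_def using fA e by simp
qed

lemma dot_vU: "finite A \<Longrightarrow> e \<in> A \<Longrightarrow> dotW (insert None (Some ` A)) (vU e) x = x (Some e)"
proof -
  assume fA: "finite A" and e: "e \<in> A"
  have "(\<Sum>e'\<in>A. (if Some e' = Some e then 1 else 0) * x (Some e')) = (\<Sum>e'\<in>A. if e' = e then x (Some e) else 0)"
    by (rule sum.cong) auto
  then show ?thesis unfolding dotW_opt[OF fA] vU_def using fA e by simp
qed

lemma dot_vB: "finite A \<Longrightarrow> dotW (insert None (Some ` A)) (vB A) x = 2 * (\<Sum>e\<in>A. x (Some e))"
proof -
  assume fA: "finite A"
  have "(\<Sum>e\<in>A. 2 * ind e A * x (Some e)) = 2 * (\<Sum>e\<in>A. x (Some e))"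
    by (simp add: ind_def sum_distrib_left)
  then show ?thesis unfolding dotW_opt[OF fA] vB_def by simp
qed

lemma sat_sysS:
  assumes fA: "finite A" and sub: "\<forall>Y\<in>\<Phi>. Y \<subseteq> A"
  shows "satS (insert None (Some ` A)) (sysS A \<Phi> ch D G) x \<longleftrightarrow>
    (\<forall>Y\<in>\<Phi>. x None \<le> (\<Sum>e\<in>Y. x (Some e))) \<and> (\<forall>e\<in>A. ch e \<le> x (Some e) \<and> x (Some e) \<le> ch e + D e)
    \<and> (\<Sum>e\<in>A. x (Some e)) \<le> G + (\<Sum>e\<in>A. ch e)"
  unfolding satS_def sysS_def using dot_vP[OF fA] dot_vL[OF fA] dot_vU[OF fA] dot_vB[OF fA] sub
  by (auto simp: ball_Un)

lemma sysS_sum: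
  fixes F :: "(arc option \<Rightarrow> real) \<times> real \<Rightarrow> real"
  assumes fA: "finite A" and fP: "finite \<Phi>"
  shows "(\<Sum>s\<in>sysS A \<Phi> ch D G. F s) = (\<Sum>Y\<in>\<Phi>. F (vP Y, 0)) + (\<Sum>e\<in>A. F (vL e, - ch e))
     + (\<Sum>e\<in>A. F (vU e, ch e + D e)) + F (vB A, 2 * (G + (\<Sum>e\<in>A. ch e)))"
proof -
  let ?S1 = "(\<lambda>Y. (vP Y, 0::real)) ` \<Phi>" and ?S2 = "(\<lambda>e. (vL e, - ch e)) ` A"
    and ?S3 = "(\<lambda>e. (vU e, ch e + D e)) ` A" and ?S4 = "{(vB A, 2 * (G + (\<Sum>e\<in>A. ch e)))}"
  have i1: "inj_on (\<lambda>Y. (vP Y, 0::real)) \<Phi>"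
  proof (rule inj_onI)
    fix Y Y' assume "(vP Y, 0::real) = (vP Y', 0)"
    then have "\<forall>e. vP Y (Some e) = vP Y' (Some e)" by simp
    then have "\<forall>e. ind e Y = ind e Y'" by (simp add: vP_def)
    then show "Y = Y'" by (auto simp: ind_def split: if_splits)
  qed
  have i2: "inj_on (\<lambda>e. (vL e, - ch e)) A"
  proof (rule inj_onI)
    fix e e' assume "(vL e, - ch e) = (vL e', - ch e')"
    then have "vL e (Some e) = vL e' (Some e)" by simp
    then show "e = e'" by (auto simp: vL_def split: if_splits)
  qed
  have i3: "inj_on (\<lambda>e. (vU e, ch e + D e)) A"
  proof (rule inj_onI)
    fix e e' assume "(vU e, ch e + D e) = (vU e', ch e' + D e')"
    then have "vU e (Some e) = vU e' (Some e)" by simp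
    then show "e = e'" by (auto simp: vU_def split: if_splits)
  qed
  have d12: "?S1 \<inter> ?S2 = {}" by (auto simp: vP_def vL_def fun_eq_iff dest!: spec[of _ None])
  have d13: "?S1 \<inter> ?S3 = {}" by (auto simp: vP_def vU_def fun_eq_iff dest!: spec[of _ None])
  have d14: "?S1 \<inter> ?S4 = {}" by (auto simp: vP_def vB_def fun_eq_iff dest!: spec[of _ None])
  have d23: "?S2 \<inter> ?S3 = {}"
  proof -
    have "vL e \<noteq> vU e'" for e e' by (auto simp: vL_def vU_def fun_eq_iff dest!: spec[of _ "Some e"] split: if_splits)
    then show ?thesis by auto
  qed
  have d24: "?S2 \<inter> ?S4 = {}"
  proof -
    have "vB A \<noteq> vL e" if "e \<in> A" for e using that by (auto simp: vL_def vB_def ind_def fun_eq_iff dest!: spec[of _ "Some e"])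
    then show ?thesis by auto
  qed
  have d34: "?S3 \<inter> ?S4 = {}"
  proof -
    have "vB A \<noteq> vU e" if "e \<in> A" for e using that by (auto simp: vU_def vB_def ind_def fun_eq_iff dest!: spec[of _ "Some e"])
    then show ?thesis by auto
  qed
  have "(\<Sum>s\<in>sysS A \<Phi> ch D G. F s) = (\<Sum>s\<in>?S1. F s) + (\<Sum>s\<in>?S2. F s) + (\<Sum>s\<in>?S3. F s) + (\<Sum>s\<in>?S4. F s)"
    unfolding sysS_def using fA fP d12 d13 d14 d23 d24 d34
    by (simp add: sum.union_disjoint Int_Un_distrib Int_Un_distrib2)
  also have "\<dots> = (\<Sum>Y\<in>\<Phi>. F (vP Y, 0)) + (\<Sum>e\<in>A. F (vL e, - ch e))
     + (\<Sum>e\<in>A. F (vU e, ch e + D e)) + F (vB A, 2 * (G + (\<Sum>e\<in>A. ch e)))"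
    using i1 i2 i3 by (simp add: sum.reindex)
  finally show ?thesis .
qed

lemma mm_strong:
  assumes fA: "finite A" and fP: "finite \<Phi>" and PNE: "\<Phi> \<noteq> {}" and sub: "\<forall>Y\<in>\<Phi>. Y \<subseteq> A"
    and nn: "\<forall>e\<in>A. 0 \<le> ch e \<and> 0 \<le> D e" and G0: "0 \<le> G"
  shows "\<exists>Q lam \<pi> \<rho>. Q \<subseteq> \<Phi> \<and> card Q \<le> card A + 1 \<and> (\<forall>Y\<in>Q. 0 \<le> lam Y) \<and> (\<Sum>Y\<in>Q. lam Y) = 1
    \<and> 0 \<le> \<pi> \<and> (\<forall>e\<in>A. 0 \<le> \<rho> e) \<and> (\<forall>e\<in>A. (\<Sum>Y\<in>Q. lam Y * ind e Y) \<le> \<pi> + \<rho> e)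
    \<and> (\<Sum>e\<in>A. ch e * (\<Sum>Y\<in>Q. lam Y * ind e Y)) + G * \<pi> + (\<Sum>e\<in>A. D e * \<rho> e)
        \<le> (SUP c\<in>Ucont A ch D G. mval c \<Phi>)"
proof -
  define W where "W = insert None (Some ` A)"
  define S where "S = sysS A \<Phi> ch D G"
  define f where "f = (SUP c\<in>Ucont A ch D G. mval c \<Phi>)"
  have fW: "finite W" using fA by (simp add: W_def)
  have zW: "None \<in> W" by (simp add: W_def)
  have fS: "finite S" unfolding S_def sysS_def using fA fP by simp
  have sat: "satS W S x \<longleftrightarrow> (\<forall>Y\<in>\<Phi>. x None \<le> (\<Sum>e\<in>Y. x (Some e))) \<and> (\<forall>e\<in>A. ch e \<le> x (Some e) \<and> x (Some e) \<le> ch e + D e)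
    \<and> (\<Sum>e\<in>A. x (Some e)) \<le> G + (\<Sum>e\<in>A. ch e)" for x
    unfolding W_def S_def using sat_sysS[OF fA sub] by blast
  have supp: "\<forall>p\<in>S. \<forall>i. i \<notin> W \<longrightarrow> fst p i = 0"
  proof (intro ballI allI impI)
    fix p i assume p: "p \<in> S" and i: "i \<notin> W"
    then obtain e where ie: "i = Some e" "e \<notin> A" unfolding W_def by (cases i) auto
    have "\<forall>Y\<in>\<Phi>. e \<notin> Y" using sub ie by auto
    then show "fst p i = 0" using p ie unfolding S_def sysS_def
      by (auto simp: vP_def vL_def vU_def vB_def ind_def)
  qed
  define x0 where "x0 = (\<lambda>i. case i of None \<Rightarrow> 0 | Some e \<Rightarrow> ch e)"
  have feas: "satS W S x0"
    unfolding sat x0_def using nn sub G0 by (auto intro!: sum_nonneg)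
  have down: "\<forall>x t. satS W S x \<longrightarrow> t \<le> x None \<longrightarrow> satS W S (x(None:=t))"
    unfolding sat by force
  have chU: "ch \<in> Ucont A ch D G" unfolding Ucont_def using nn G0 by auto
  obtain Y0 where Y0: "Y0 \<in> \<Phi>" using PNE by auto
  have mv_le: "mval c \<Phi> \<le> (\<Sum>e\<in>Y. c e)" if "Y \<in> \<Phi>" for c Y
    unfolding mval_def using fP that by auto
  have bdd: "bdd_above ((\<lambda>c. mval c \<Phi>) ` Ucont A ch D G)"
  proof (rule bdd_aboveI2)
    fix c assume c: "c \<in> Ucont A ch D G"
    have "mval c \<Phi> \<le> (\<Sum>e\<in>Y0. c e)" using mv_le Y0 by auto
    also have "\<dots> \<le> (\<Sum>e\<in>Y0. ch e + D e)" using c sub Y0 unfolding Ucont_def by (intro sum_mono) auto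
    finally show "mval c \<Phi> \<le> (\<Sum>e\<in>Y0. ch e + D e)" .
  qed
  have bnd: "\<forall>x. satS W S x \<longrightarrow> x None \<le> f"
  proof (intro allI impI)
    fix x assume sx: "satS W S x"
    define c where "c e = (if e \<in> A then x (Some e) else ch e)" for e
    have "(\<Sum>e\<in>A. c e - ch e) = (\<Sum>e\<in>A. x (Some e)) - (\<Sum>e\<in>A. ch e)"
      by (simp add: c_def sum_subtractf)
    then have cU: "c \<in> Ucont A ch D G" using sx unfolding sat Ucont_def by (auto simp: c_def)
    have "x None \<le> mval c \<Phi>"
      unfolding mval_def
    proof (rule Min.boundedI)
      show "finite ((\<lambda>Y. sum c Y) ` \<Phi>)" using fP by simp
      show "(\<lambda>Y. sum c Y) ` \<Phi> \<noteq> {}" using PNE by simp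
    next
      fix a assume "a \<in> (\<lambda>Y. sum c Y) ` \<Phi>"
      then obtain Y where Y: "Y \<in> \<Phi>" "a = sum c Y" by auto
      have "sum c Y = (\<Sum>e\<in>Y. x (Some e))" using sub Y by (intro sum.cong) (auto simp: c_def)
      then show "x None \<le> a" using sx Y unfolding sat by auto
    qed
    also have "\<dots> \<le> f" unfolding f_def by (rule cSUP_upper[OF cU bdd])
    finally show "x None \<le> f" .
  qed
  obtain \<mu> where mu: "\<forall>s\<in>S. 0 \<le> \<mu> s" "\<forall>i. (\<Sum>s\<in>S. \<mu> s * fst s i) = (if i = None then 1 else 0)"
    "(\<Sum>s\<in>S. \<mu> s * snd s) \<le> f"
    using farkas_z[OF fW zW fS supp feas down bnd] by blast
  define lam where "lam Y = \<mu> (vP Y, 0)" for Y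
  define \<sigma> where "\<sigma> e = \<mu> (vL e, - ch e)" for e
  define \<tau> where "\<tau> e = \<mu> (vU e, ch e + D e)" for e
  define p0 where "p0 = \<mu> (vB A, 2 * (G + (\<Sum>e\<in>A. ch e)))"
  have spl: "(\<Sum>s\<in>S. \<mu> s * F s) = (\<Sum>Y\<in>\<Phi>. lam Y * F (vP Y, 0)) + (\<Sum>e\<in>A. \<sigma> e * F (vL e, - ch e))
     + (\<Sum>e\<in>A. \<tau> e * F (vU e, ch e + D e)) + p0 * F (vB A, 2 * (G + (\<Sum>e\<in>A. ch e)))" for F
    unfolding S_def lam_def \<sigma>_def \<tau>_def p0_def by (rule sysS_sum[OF fA fP])
  have lnn: "\<forall>Y\<in>\<Phi>. 0 \<le> lam Y" using mu(1) unfolding lam_def S_def sysS_def by auto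
  have snn: "\<forall>e\<in>A. 0 \<le> \<sigma> e" using mu(1) unfolding \<sigma>_def S_def sysS_def by auto
  have tnn: "\<forall>e\<in>A. 0 \<le> \<tau> e" using mu(1) unfolding \<tau>_def S_def sysS_def by auto
  have pnn: "0 \<le> p0" using mu(1) unfolding p0_def S_def sysS_def by auto
  have ls: "(\<Sum>Y\<in>\<Phi>. lam Y) = 1"
    using mu(2)[rule_format, of None] spl[of "\<lambda>s. fst s None"] by (simp add: vP_def vL_def vU_def vB_def)
  define y where "y e = (\<Sum>Y\<in>\<Phi>. lam Y * ind e Y)" for e
  have teq: "\<tau> e = y e + \<sigma> e - 2 * p0" if e: "e \<in> A" for e
  proof -
    have a: "(\<Sum>Y\<in>\<Phi>. lam Y * vP Y (Some e)) = - y e"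
      unfolding y_def vP_def by (simp add: sum_negf)
    have b: "(\<Sum>e'\<in>A. \<sigma> e' * vL e' (Some e)) = - \<sigma> e"
    proof -
      have "(\<Sum>e'\<in>A. \<sigma> e' * vL e' (Some e)) = (\<Sum>e'\<in>A. if e' = e then - \<sigma> e else 0)"
        by (rule sum.cong) (auto simp: vL_def)
      then show ?thesis using fA e by simp
    qed
    have c: "(\<Sum>e'\<in>A. \<tau> e' * vU e' (Some e)) = \<tau> e"
    proof -
      have "(\<Sum>e'\<in>A. \<tau> e' * vU e' (Some e)) = (\<Sum>e'\<in>A. if e' = e then \<tau> e else 0)"
        by (rule sum.cong) (auto simp: vU_def)
      then show ?thesis using fA e by simp
    qed
    have d: "vB A (Some e) = 2" using e by (simp add: vB_def ind_def)
    have "0 = - y e - \<sigma> e + \<tau> e + p0 * 2"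
      using mu(2)[rule_format, of "Some e"] spl[of "\<lambda>s. fst s (Some e)"] a b c d by simp
    then show ?thesis by simp
  qed
  have rhs: "(\<Sum>s\<in>S. \<mu> s * snd s) = (\<Sum>e\<in>A. ch e * y e) + G * (2 * p0) + (\<Sum>e\<in>A. D e * \<tau> e)"
  proof -
    have "(\<Sum>s\<in>S. \<mu> s * snd s) = (\<Sum>e\<in>A. \<sigma> e * - ch e) + (\<Sum>e\<in>A. \<tau> e * (ch e + D e)) + p0 * (2 * (G + (\<Sum>e\<in>A. ch e)))"
      using spl[of snd] by simp
    also have "(\<Sum>e\<in>A. \<tau> e * (ch e + D e)) = (\<Sum>e\<in>A. ch e * y e) + (\<Sum>e\<in>A. \<sigma> e * ch e) - 2 * p0 * (\<Sum>e\<in>A. ch e) + (\<Sum>e\<in>A. D e * \<tau> e)"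
    proof -
      have "(\<Sum>e\<in>A. \<tau> e * (ch e + D e)) = (\<Sum>e\<in>A. ch e * y e + \<sigma> e * ch e - 2 * p0 * ch e + D e * \<tau> e)"
      proof (rule sum.cong[OF refl])
        fix e assume e: "e \<in> A"
        show "\<tau> e * (ch e + D e) = ch e * y e + \<sigma> e * ch e - 2 * p0 * ch e + D e * \<tau> e"
          unfolding teq[OF e] by (simp add: algebra_simps)
      qed
      then show ?thesis by (simp add: sum.distrib sum_subtractf sum_distrib_left)
    qed
    finally show ?thesis by (simp add: algebra_simps sum_negf)
  qed
  obtain Q lam' where Q: "Q \<subseteq> \<Phi>" "card Q \<le> card A + 1" "\<forall>Y\<in>Q. 0 \<le> lam' Y" "(\<Sum>Y\<in>Q. lam' Y) = 1"
    "\<forall>e. (\<Sum>Y\<in>Q. lam' Y * ind e Y) = y e"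
    using caratheodory[OF fA fP sub lnn ls] unfolding y_def ind_def by blast
  show ?thesis
  proof (intro exI conjI)
    show "Q \<subseteq> \<Phi>" "card Q \<le> card A + 1" "\<forall>Y\<in>Q. 0 \<le> lam' Y" "(\<Sum>Y\<in>Q. lam' Y) = 1" using Q by auto
    show "0 \<le> 2 * p0" using pnn by simp
    show "\<forall>e\<in>A. 0 \<le> \<tau> e" by (rule tnn)
    show "\<forall>e\<in>A. (\<Sum>Y\<in>Q. lam' Y * ind e Y) \<le> 2 * p0 + \<tau> e" using Q(5) teq snn by auto
    show "(\<Sum>e\<in>A. ch e * (\<Sum>Y\<in>Q. lam' Y * ind e Y)) + G * (2 * p0) + (\<Sum>e\<in>A. D e * \<tau> e) \<le> (SUP c\<in>Ucont A ch D G. mval c \<Phi>)"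
      using rhs mu(3) unfolding f_def by (simp only: Q(5)[rule_format])
  qed
qed


definition pathC :: "nat set \<Rightarrow> arc set \<Rightarrow> nat \<Rightarrow> nat \<Rightarrow> nat \<Rightarrow> (nat \<Rightarrow> nat \<Rightarrow> real) \<Rightarrow> (nat \<Rightarrow> arc \<Rightarrow> real) \<Rightarrow> (arc \<Rightarrow> real) \<Rightarrow> bool" where
  "pathC V A s t n u a z \<longleftrightarrow>
   (\<forall>i<n. \<forall>v\<in>V. u i v \<in> {0,1}) \<and> (\<forall>i. i+1<n \<longrightarrow> (\<forall>e\<in>A. a i e \<in> {0,1})) \<and> (\<forall>e\<in>A. z e \<in> {0,1})
 \<and> (\<forall>i<n. (\<Sum>v\<in>V. u i v) \<le> 1)
 \<and> (\<forall>i. i+1<n \<longrightarrow> (\<Sum>v\<in>V. u (i+1) v) \<le> (\<Sum>v\<in>V. u i v))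
 \<and> 1 \<le> u 0 s
 \<and> (\<forall>v\<in>V. (\<Sum>i<n. u i v) \<le> 1)
 \<and> 1 \<le> (\<Sum>i<n. u i t)
 \<and> (\<forall>i. i+1<n \<longrightarrow> u i t + (\<Sum>v\<in>V. u (i+1) v) \<le> 1)
 \<and> (\<forall>i. i+1<n \<longrightarrow> (\<forall>e\<in>A. a i e \<le> u i (fst e) \<and> a i e \<le> u (i+1) (snd e)))
 \<and> (\<forall>i. i+1<n \<longrightarrow> (\<forall>w\<in>V. u (i+1) w \<le> (\<Sum>e\<in>{e\<in>A. snd e = w}. a i e)))
 \<and> (\<forall>e\<in>A. z e = (\<Sum>i<n-1. a i e))"

lemma sum01_uniq:
  fixes f :: "'a \<Rightarrow> real"
  assumes "finite S" "\<forall>x\<in>S. f x \<in> {0,1}" "sum f S \<le> 1" "x\<in>S" "y\<in>S" "f x = 1" "f y = 1"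
  shows "x = y"
proof (rule ccontr)
  assume ne: "x \<noteq> y"
  have "sum f {x,y} \<le> sum f S" using assms by (intro sum_mono2) auto
  then show False using assms ne by simp
qed

lemma sum01_ex:
  fixes f :: "'a \<Rightarrow> real"
  assumes "finite S" "\<forall>x\<in>S. f x \<in> {0,1}" "1 \<le> sum f S"
  shows "\<exists>x\<in>S. f x = 1"
proof (rule ccontr)
  assume "\<not> ?thesis"
  then have "\<forall>x\<in>S. f x = 0" using assms(2) by auto
  then show False using assms(3) by simp
qed

lemma sum01_ge:
  fixes f :: "'a \<Rightarrow> real"
  assumes "finite S" "\<forall>x\<in>S. f x \<in> {0,1}" "x \<in> S" "f x = 1"
  shows "1 \<le> sum f S"
proof -
  have "sum f {x} \<le> sum f S" using assms by (intro sum_mono2) auto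
  then show ?thesis using assms by simp
qed

lemma downclosed_prefix:
  assumes "finite S" "\<forall>i. Suc i \<in> S \<longrightarrow> i \<in> S"
  shows "S = {..<card S}"
proof (cases "S = {}")
  case True then show ?thesis by simp
next
  case False
  define M where "M = Max S"
  have MS: "M \<in> S" using assms False by (simp add: M_def)
  have le: "i \<le> M" if "i \<in> S" for i using assms that by (simp add: M_def)
  have down: "j - d \<in> S" if "j \<in> S" for j d
  proof (induction d)
    case 0 then show ?case using that by simp
  next
    case (Suc d)
    show ?case
    proof (cases "d < j")
      case True
      then have "Suc (j - Suc d) = j - d" by simp
      then show ?thesis using Suc assms(2) by metis
    next
      case False then show ?thesis using Suc by simp
    qed
  qed
  have "S = {..M}"
  proof
    show "S \<subseteq> {..M}" using le by auto
    show "{..M} \<subseteq> S"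
    proof
      fix i assume "i \<in> {..M}"
      then have "i = M - (M - i)" by simp
      then show "i \<in> S" using down[OF MS, of "M - i"] by simp
    qed
  qed
  then show ?thesis by (simp add: lessThan_Suc_atMost[symmetric])
qed

lemma set_zip_tl: "set (zip xs (tl xs)) = {(xs!i, xs!Suc i) | i. Suc i < length xs}"
  by (auto simp: set_zip nth_tl)

lemma path_extract:
  assumes fV: "finite V" and AV: "A \<subseteq> V \<times> V" and sV: "s \<in> V" and tV: "t \<in> V"
    and n: "n = card V" and pc: "pathC V A s t n u a z"
  shows "{e\<in>A. z e = 1} \<in> Paths A s t"
proof -
  have bu: "\<forall>i<n. \<forall>v\<in>V. u i v \<in> {0,1}" and ba: "\<forall>i. i+1<n \<longrightarrow> (\<forall>e\<in>A. a i e \<in> {0,1})"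
    and bz: "\<forall>e\<in>A. z e \<in> {0,1}"
    and P1: "\<forall>i<n. (\<Sum>v\<in>V. u i v) \<le> 1"
    and P2: "\<forall>i. i+1<n \<longrightarrow> (\<Sum>v\<in>V. u (i+1) v) \<le> (\<Sum>v\<in>V. u i v)"
    and P3: "1 \<le> u 0 s"
    and P4: "\<forall>v\<in>V. (\<Sum>i<n. u i v) \<le> 1"
    and P5: "1 \<le> (\<Sum>i<n. u i t)"
    and P6: "\<forall>i. i+1<n \<longrightarrow> u i t + (\<Sum>v\<in>V. u (i+1) v) \<le> 1"
    and P7: "\<forall>i. i+1<n \<longrightarrow> (\<forall>e\<in>A. a i e \<le> u i (fst e) \<and> a i e \<le> u (i+1) (snd e))"
    and P8: "\<forall>i. i+1<n \<longrightarrow> (\<forall>w\<in>V. u (i+1) w \<le> (\<Sum>e\<in>{e\<in>A. snd e = w}. a i e))"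
    and P9: "\<forall>e\<in>A. z e = (\<Sum>i<n-1. a i e)"
    using pc unfolding pathC_def by blast+
  have n0: "0 < n" using fV sV n card_gt_0_iff by blast
  define occ where "occ i \<longleftrightarrow> i < n \<and> (\<exists>v\<in>V. u i v = 1)" for i
  have sumocc: "(\<Sum>v\<in>V. u i v) = (if occ i then 1 else 0)" if i: "i < n" for i
  proof (cases "occ i")
    case True
    then obtain v where "v\<in>V" "u i v = 1" unfolding occ_def by auto
    then have "1 \<le> (\<Sum>v\<in>V. u i v)" using sum01_ge[OF fV, of "u i"] bu i by auto
    then show ?thesis using P1 i True by auto
  next
    case False
    then have "\<forall>v\<in>V. u i v = 0" using bu i unfolding occ_def by auto
    then show ?thesis using False by simp
  qed
  have occ_down: "occ i" if "occ (Suc i)" for i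
  proof -
    have i: "Suc i < n" using that unfolding occ_def by auto
    then have "1 \<le> (\<Sum>v\<in>V. u i v)" using P2 sumocc[OF i] that by auto
    then show ?thesis using sum01_ex[OF fV, of "u i"] bu i unfolding occ_def by auto
  qed
  define S where "S = {i. occ i}"
  have fS: "finite S" unfolding S_def occ_def by auto
  define L where "L = card S"
  have SL: "S = {..<L}" unfolding L_def by (rule downclosed_prefix[OF fS]) (auto simp: S_def occ_down)
  have occ_iff: "occ i \<longleftrightarrow> i < L" for i using SL unfolding S_def by blast
  have Ln: "L \<le> n"
  proof -
    have "S \<subseteq> {..<n}" unfolding S_def occ_def by auto
    then show ?thesis unfolding L_def using card_mono[of "{..<n}" S] by simp
  qed
  have u0s: "u 0 s = 1" using P3 bu n0 sV by force
  have L1: "0 < L" using occ_iff[of 0] u0s n0 sV unfolding occ_def by auto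
  define vt where "vt i = (THE v. v \<in> V \<and> u i v = 1)" for i
  have uniq: "v = w" if "i < n" "v \<in> V" "w \<in> V" "u i v = 1" "u i w = 1" for i v w
    using sum01_uniq[OF fV, of "u i"] bu P1 that by auto
  have vt_eq: "vt i = v" if "i < n" "v \<in> V" "u i v = 1" for i v
    unfolding vt_def using uniq that by (intro the_equality) auto
  have vt_prop: "vt i \<in> V \<and> u i (vt i) = 1" if "i < L" for i
  proof -
    have "occ i" using that occ_iff by auto
    then obtain v where "i < n" "v\<in>V" "u i v = 1" unfolding occ_def by auto
    then show ?thesis using vt_eq by auto
  qed
  define vs where "vs = map vt [0..<L]"
  have len: "length vs = L" unfolding vs_def by simp
  have nth: "vs ! i = vt i" if "i < L" for i unfolding vs_def using that by simp
  have ne: "vs \<noteq> []" using L1 len by auto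
  have hd: "hd vs = s" using ne nth[OF L1] vt_eq[OF n0 sV u0s] by (simp add: hd_conv_nth)
  have dist: "distinct vs"
    unfolding distinct_conv_nth len
  proof (intro allI impI)
    fix i j assume ij: "i < L" "j < L" "i \<noteq> j"
    show "vs ! i \<noteq> vs ! j"
    proof
      assume "vs ! i = vs ! j"
      then have eq: "vt i = vt j" using nth ij by simp
      have "i < n" "j < n" using ij Ln by auto
      moreover have "u i (vt i) = 1" "vt i \<in> V" using vt_prop ij by auto
      moreover have "u j (vt i) = 1" using vt_prop[of j] ij eq by simp
      ultimately have "i = j" using sum01_uniq[of "{..<n}" "\<lambda>k. u k (vt i)" i j] bu P4 by auto
      then show False using ij by simp
    qed
  qed
  obtain j where j: "j < n" "u j t = 1" using sum01_ex[of "{..<n}" "\<lambda>i. u i t"] P5 bu tV by auto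
  have jL: "j < L" using j occ_iff tV unfolding occ_def by auto
  have jlast: "j = L - 1"
  proof (rule ccontr)
    assume "j \<noteq> L - 1"
    then have sj: "Suc j < L" using jL by auto
    then have "Suc j < n" using Ln by auto
    then have "u j t + (\<Sum>v\<in>V. u (Suc j) v) \<le> 1" using P6 by auto
    moreover have "(\<Sum>v\<in>V. u (Suc j) v) = 1" using sumocc[OF \<open>Suc j < n\<close>] occ_iff sj by auto
    ultimately show False using j by simp
  qed
  have last: "last vs = t"
    using ne len jlast jL nth vt_eq[OF j(1) tV j(2)] by (simp add: last_conv_nth)
  have aprop: "Suc i < L \<and> e = (vt i, vt (Suc i))" if i: "Suc i < n" and e: "e \<in> A" and ae: "a i e = 1" for i e
  proof -
    have fe: "fst e \<in> V" "snd e \<in> V" using e AV by auto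
    have "a i e \<le> u i (fst e)" "a i e \<le> u (Suc i) (snd e)" using P7 i e by auto
    moreover have "u i (fst e) \<in> {0,1}" "u (Suc i) (snd e) \<in> {0,1}" using bu i fe by auto
    ultimately have u1: "u i (fst e) = 1" "u (Suc i) (snd e) = 1" using ae by auto
    then have "occ (Suc i)" using i fe unfolding occ_def by auto
    then have sL: "Suc i < L" using occ_iff by auto
    have "vt i = fst e" using vt_eq[of i "fst e"] u1 fe i by auto
    moreover have "vt (Suc i) = snd e" using vt_eq[of "Suc i" "snd e"] u1 fe i by auto
    ultimately show ?thesis using sL by auto
  qed
  have arc_ex: "(vt i, vt (Suc i)) \<in> A \<and> a i (vt i, vt (Suc i)) = 1" if sL: "Suc i < L" for i
  proof -
    have sn: "Suc i < n" using sL Ln by auto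
    have w: "vt (Suc i) \<in> V" "u (Suc i) (vt (Suc i)) = 1" using vt_prop sL by auto
    then have "1 \<le> (\<Sum>e\<in>{e\<in>A. snd e = vt (Suc i)}. a i e)" using P8 sn by force
    moreover have "finite {e\<in>A. snd e = vt (Suc i)}" using fV AV finite_subset[of A "V \<times> V"] by auto
    ultimately obtain e where e: "e \<in> A" "a i e = 1"
      using sum01_ex[of "{e\<in>A. snd e = vt (Suc i)}" "a i"] ba sn by auto
    then show ?thesis using aprop[OF sn e] by auto
  qed
  have W: "walk_arcs vs = {(vt i, vt (Suc i)) | i. Suc i < L}"
    unfolding walk_arcs_def set_zip_tl len using nth by (auto; metis Suc_lessD)
  have WA: "walk_arcs vs \<subseteq> A" using W arc_ex by auto
  have fA: "finite A" using fV AV finite_subset[of A "V \<times> V"] by auto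
  have zchar: "z e = 1 \<longleftrightarrow> e \<in> walk_arcs vs" if e: "e \<in> A" for e
  proof
    assume "z e = 1"
    then have "1 \<le> (\<Sum>i<n-1. a i e)" using P9 e by auto
    then obtain i where "i < n - 1" "a i e = 1" using sum01_ex[of "{..<n-1}" "\<lambda>i. a i e"] ba e by auto
    then show "e \<in> walk_arcs vs" using aprop[of i e] e W by auto
  next
    assume "e \<in> walk_arcs vs"
    then obtain i where i: "Suc i < L" "e = (vt i, vt (Suc i))" using W by auto
    then have "a i e = 1" using arc_ex by auto
    moreover have "i < n - 1" using i Ln by auto
    ultimately have "1 \<le> (\<Sum>i<n-1. a i e)" using sum01_ge[of "{..<n-1}" "\<lambda>i. a i e"] ba e by auto
    then show "z e = 1" using P9 bz e by force
  qed
  have "{e\<in>A. z e = 1} = walk_arcs vs" using zchar WA by auto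
  moreover have "is_simple_path A s t vs" unfolding is_simple_path_def using ne hd last dist WA by auto
  ultimately show ?thesis unfolding Paths_def by auto
qed

lemma path_construct:
  assumes fV: "finite V" and AV: "A \<subseteq> V \<times> V" and sV: "s \<in> V" and tV: "t \<in> V"
    and n: "n = card V" and X: "X \<in> Paths A s t"
  shows "\<exists>u a. pathC V A s t n u a (\<lambda>e. if e \<in> X then 1 else 0)"
proof -
  obtain vs where sp: "is_simple_path A s t vs" and Xw: "X = walk_arcs vs" using X unfolding Paths_def by auto
  have ne: "vs \<noteq> []" and hd: "hd vs = s" and last: "last vs = t" and dist: "distinct vs" and WA: "walk_arcs vs \<subseteq> A"
    using sp unfolding is_simple_path_def by auto
  define L where "L = length vs"
  have L0: "0 < L" using ne L_def by auto
  have W: "walk_arcs vs = {(vs!i, vs!Suc i) | i. Suc i < L}" unfolding walk_arcs_def set_zip_tl L_def by simp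
  have inA: "(vs!i, vs!Suc i) \<in> A" if "Suc i < L" for i using W WA that by auto
  have vV: "vs ! i \<in> V" if "i < L" for i
  proof (cases i)
    case 0 then show ?thesis using hd ne sV by (simp add: hd_conv_nth)
  next
    case (Suc k) then show ?thesis using inA[of k] that AV by auto
  qed
  have Ln: "L \<le> n"
  proof -
    have "set vs \<subseteq> V" using vV by (auto simp: in_set_conv_nth L_def)
    then have "card (set vs) \<le> card V" using fV by (simp add: card_mono)
    then show ?thesis using dist by (simp add: distinct_card L_def n)
  qed
  have inj: "i = j" if "i < L" "j < L" "vs!i = vs!j" for i j using dist that nth_eq_iff_index_eq L_def by blast
  define u where "u i v = (if i < L \<and> vs!i = v then 1 else (0::real))" for i v
  define a where "a i e = (if Suc i < L \<and> e = (vs!i, vs!Suc i) then 1 else (0::real))" for i e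
  let ?z = "\<lambda>e. if e \<in> X then 1 else (0::real)"
  have S1: "(\<Sum>v\<in>V. u i v) = (if i < L then 1 else 0)" for i
  proof (cases "i < L")
    case True
    have "(\<Sum>v\<in>V. u i v) = (\<Sum>v\<in>V. if v = vs!i then 1 else 0)" by (rule sum.cong) (auto simp: u_def True)
    then show ?thesis using True vV fV by simp
  next
    case False then show ?thesis by (simp add: u_def)
  qed
  have S4: "(\<Sum>i<n. u i v) \<le> 1" for v
  proof (cases "\<exists>k<L. vs!k = v")
    case True
    then obtain k where k: "k < L" "vs!k = v" by auto
    have "(\<Sum>i<n. u i v) = (\<Sum>i<n. if i = k then 1 else 0)"
      by (rule sum.cong) (use k inj in \<open>auto simp: u_def\<close>)
    then show ?thesis by simp
  next
    case False
    then have "(\<Sum>i<n. u i v) = (\<Sum>i<n. 0)" by (intro sum.cong) (auto simp: u_def)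
    then show ?thesis by simp
  qed
  have lastn: "vs ! (L - 1) = t" using last ne by (simp add: last_conv_nth L_def)
  have P5: "1 \<le> (\<Sum>i<n. u i t)"
  proof -
    have "u (L-1) t = 1" using L0 lastn by (simp add: u_def)
    moreover have "u (L-1) t \<le> (\<Sum>i<n. u i t)"
      using L0 Ln by (intro member_le_sum) (auto simp: u_def)
    ultimately show ?thesis by simp
  qed
  have P6: "u i t + (\<Sum>v\<in>V. u (i+1) v) \<le> 1" if "i+1 < n" for i
  proof (cases "i < L \<and> vs!i = t")
    case True
    then have "i = L - 1" using inj[of i "L-1"] lastn L0 by auto
    then show ?thesis using S1[of "i+1"] True by (simp add: u_def)
  next
    case False then show ?thesis using S1[of "i+1"] by (simp add: u_def)
  qed
  have P8: "u (i+1) w \<le> (\<Sum>e\<in>{e\<in>A. snd e = w}. a i e)" if "i+1 < n" for i w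
  proof (cases "Suc i < L \<and> vs!Suc i = w")
    case True
    have fA: "finite A" using fV AV finite_subset[of A "V \<times> V"] by auto
    have "a i (vs!i, vs!Suc i) \<le> (\<Sum>e\<in>{e\<in>A. snd e = w}. a i e)"
      using True inA fA by (intro member_le_sum) (auto simp: a_def)
    then show ?thesis using True by (simp add: a_def u_def)
  next
    case False
    have "0 \<le> (\<Sum>e\<in>{e\<in>A. snd e = w}. a i e)" by (intro sum_nonneg) (simp add: a_def)
    then show ?thesis using False by (auto simp: u_def)
  qed
  have P9: "?z e = (\<Sum>i<n-1. a i e)" if e: "e \<in> A" for e
  proof (cases "e \<in> X")
    case True
    then obtain k where k: "Suc k < L" "e = (vs!k, vs!Suc k)" using Xw W by auto
    have "(\<Sum>i<n-1. a i e) = (\<Sum>i<n-1. if i = k then 1 else 0)"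
      by (rule sum.cong) (use k inj in \<open>auto simp: a_def\<close>)
    also have "\<dots> = 1" using k Ln by simp
    finally show ?thesis using True by simp
  next
    case False
    have "a i e = 0" for i using False Xw W by (auto simp: a_def)
    then show ?thesis using False by simp
  qed
  have "pathC V A s t n u a ?z" unfolding pathC_def
    apply (intro conjI)
    subgoal by (simp add: u_def)
    subgoal by (simp add: a_def)
    subgoal by simp
    subgoal using S1 by simp
    subgoal using S1 by simp
    subgoal using L0 hd ne by (simp add: u_def hd_conv_nth L_def)
    subgoal using S4 by blast
    subgoal by (rule P5)
    subgoal using P6 by blast
    subgoal by (auto simp: a_def u_def)
    subgoal using P8 by blast
    subgoal using P9 by blast
    done
  then show ?thesis by blast
qed


datatype vn = U nat nat nat | Ar nat nat arc | Z nat arc | R nat arc | L nat | Qv nat arc | Yv arc | Pi | Rho arc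

fun isInt :: "vn \<Rightarrow> bool" where
  "isInt (U _ _ _) = True" | "isInt (Ar _ _ _) = True" | "isInt (Z _ _) = True" | "isInt _ = False"

definition prod3 :: "'a list \<Rightarrow> 'b list \<Rightarrow> 'c list \<Rightarrow> ('a \<times> 'b \<times> 'c) list" where
  "prod3 xs ys zs = List.product xs (List.product ys zs)"

lemma prod3_simps[simp]: "set (prod3 xs ys zs) = set xs \<times> set ys \<times> set zs" "length (prod3 xs ys zs) = length xs * length ys * length zs"
  "distinct xs \<Longrightarrow> distinct ys \<Longrightarrow> distinct zs \<Longrightarrow> distinct (prod3 xs ys zs)"
  by (auto simp: prod3_def distinct_product)

definition evalE :: "(vn \<Rightarrow> real) \<Rightarrow> (real \<times> vn) list \<Rightarrow> real" where
  "evalE g E = sum_list (map (\<lambda>(c,w). c * g w) E)"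

definition coefE :: "(real \<times> vn) list \<Rightarrow> vn \<Rightarrow> real" where
  "coefE E w = sum_list (map (\<lambda>(c,w'). if w' = w then c else 0) E)"

lemma evalE_simps[simp]:
  "evalE g [] = 0" "evalE g ((c,w)#E) = c * g w + evalE g E" "evalE g (E1 @ E2) = evalE g E1 + evalE g E2"
  by (auto simp: evalE_def)

definition negE :: "(real \<times> vn) list \<Rightarrow> (real \<times> vn) list" where
  "negE E = map (\<lambda>(c,w). (-c, w)) E"

lemma evalE_negE[simp]: "evalE g (negE E) = - evalE g E"
  by (induction E) (auto simp: negE_def evalE_def)

lemma evalE_concat[simp]: "evalE g (concat (map F xs)) = sum_list (map (\<lambda>x. evalE g (F x)) xs)"
  by (induction xs) (auto simp: evalE_def)

lemma evalE_map[simp]: "evalE g (map (\<lambda>x. (c x, w x)) xs) = sum_list (map (\<lambda>x. c x * g (w x)) xs)"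
  by (induction xs) (auto simp: evalE_def)

definition leE :: "(real \<times> vn) list \<Rightarrow> (real \<times> vn) list \<Rightarrow> (real \<times> vn) list \<times> real" where
  "leE E1 E2 = (E1 @ negE E2, 0)"

definition eqE :: "(real \<times> vn) list \<Rightarrow> (real \<times> vn) list \<Rightarrow> ((real \<times> vn) list \<times> real) list" where
  "eqE E1 E2 = [leE E1 E2, leE E2 E1]"

definition names :: "(real \<times> vn) list \<Rightarrow> vn set" where "names E = snd ` set E"

lemma names_simps[simp]: "names [] = {}" "names ((c,w)#E) = insert w (names E)" "names (E1 @ E2) = names E1 \<union> names E2"
  "names (negE E) = names E" "names (map (\<lambda>x. (cn x, wn x)) xs) = wn ` set xs"
  by (auto simp: names_def negE_def image_image case_prod_beta image_iff; force)+

lemma names_concat[simp]: "names (concat (map F xs)) = (\<Union>x\<in>set xs. names (F x))"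
  by (auto simp: names_def)

lemma coef_bridge:
  assumes d: "distinct vl" and sub: "names E \<subseteq> set vl"
  shows "(\<Sum>i<length vl. coefE E (vl!i) * x i) = evalE (\<lambda>w. x (THE i. i < length vl \<and> vl!i = w)) E"
  using sub
proof (induction E)
  case Nil then show ?case by (simp add: coefE_def)
next
  case (Cons cw E)
  obtain c w where cw: "cw = (c,w)" by (cases cw)
  have wv: "w \<in> set vl" and sub': "names E \<subseteq> set vl" using Cons.prems cw by auto
  obtain k where k: "k < length vl" "vl!k = w" using wv by (auto simp: in_set_conv_nth)
  have the: "(THE i. i < length vl \<and> vl!i = w) = k"
    using k d by (auto intro!: the_equality simp: nth_eq_iff_index_eq)
  have ce: "coefE (cw#E) w' = (if w = w' then c else 0) + coefE E w'" for w'
    unfolding coefE_def cw by simp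
  have "(\<Sum>i<length vl. coefE (cw#E) (vl!i) * x i) = (\<Sum>i<length vl. (if w = vl!i then c else 0) * x i) + (\<Sum>i<length vl. coefE E (vl!i) * x i)"
    unfolding ce by (simp add: distrib_right sum.distrib)
  also have "(\<Sum>i<length vl. (if w = vl!i then c else 0) * x i) = (\<Sum>i<length vl. if i = k then c * x k else 0)"
    using k d by (intro sum.cong) (auto simp: nth_eq_iff_index_eq)
  also have "\<dots> = c * x k" using k by simp
  finally show ?case using Cons.IH[OF sub'] the cw by simp
qed

definition cst :: "real \<Rightarrow> aff" where "cst r = (r, \<lambda>_. 0, \<lambda>_. 0, \<lambda>_. 0, 0)"

lemma aff_cst[simp]: "aff_eval A C ch D G (cst r) = r"
  by (simp add: cst_def)

definition dl :: "arc \<Rightarrow> arc \<Rightarrow> real" where "dl e = (\<lambda>e'. if e' = e then 1 else 0)"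

fun ocoef :: "vn \<Rightarrow> aff" where
  "ocoef (Z p e) = (if p = 0 then (0, dl e, \<lambda>_. 0, \<lambda>_. 0, 0) else cst 0)"
| "ocoef (Yv e) = (0, \<lambda>_. 0, dl e, \<lambda>_. 0, 0)"
| "ocoef Pi = (0, \<lambda>_. 0, \<lambda>_. 0, \<lambda>_. 0, 1)"
| "ocoef (Rho e) = (0, \<lambda>_. 0, \<lambda>_. 0, dl e, 0)"
| "ocoef _ = cst 0"

lemma mm_weak_idx:
  assumes fA: "finite A" and fJ: "finite J" and fP: "finite \<Phi>" and Yf: "\<forall>j\<in>J. Yf j \<in> \<Phi>"
    and sub: "\<forall>Y\<in>\<Phi>. Y \<subseteq> A"
    and lnn: "\<forall>j\<in>J. 0 \<le> lam j" and ls: "(\<Sum>j\<in>J. lam j) = 1"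
    and pnn: "0 \<le> \<pi>" and rnn: "\<forall>e\<in>A. 0 \<le> \<rho> e"
    and cov: "\<forall>e\<in>A. (\<Sum>j\<in>J. lam j * ind e (Yf j)) \<le> \<pi> + \<rho> e"
    and c: "c \<in> Ucont A ch D G"
  shows "mval c \<Phi> \<le> (\<Sum>e\<in>A. ch e * (\<Sum>j\<in>J. lam j * ind e (Yf j))) + G * \<pi> + (\<Sum>e\<in>A. D e * \<rho> e)"
proof -
  let ?y = "\<lambda>e. (\<Sum>j\<in>J. lam j * ind e (Yf j))"
  have cb: "\<forall>e\<in>A. ch e \<le> c e \<and> c e \<le> ch e + D e" "(\<Sum>e\<in>A. c e - ch e) \<le> G"
    using c unfolding Ucont_def by auto
  have "mval c \<Phi> = (\<Sum>j\<in>J. lam j * mval c \<Phi>)" using ls by (simp add: sum_distrib_right[symmetric])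
  also have "\<dots> \<le> (\<Sum>j\<in>J. lam j * (\<Sum>e\<in>Yf j. c e))"
    apply (rule sum_mono) apply (rule mult_left_mono)
    using Yf fP lnn unfolding mval_def by auto
  also have "\<dots> = (\<Sum>j\<in>J. lam j * (\<Sum>e\<in>A. ind e (Yf j) * c e))"
    using sum_ind[OF fA] sub Yf by (intro sum.cong) auto
  also have "\<dots> = (\<Sum>e\<in>A. \<Sum>j\<in>J. lam j * ind e (Yf j) * c e)"
    by (subst sum.swap) (simp add: sum_distrib_left mult.assoc)
  also have "\<dots> = (\<Sum>e\<in>A. c e * ?y e)"
    by (simp add: sum_distrib_left mult_ac)
  also have "\<dots> = (\<Sum>e\<in>A. ch e * ?y e) + (\<Sum>e\<in>A. (c e - ch e) * ?y e)"
    by (simp add: algebra_simps sum.distrib[symmetric])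
  also have "(\<Sum>e\<in>A. (c e - ch e) * ?y e) \<le> (\<Sum>e\<in>A. (c e - ch e) * (\<pi> + \<rho> e))"
    using cb cov by (intro sum_mono mult_left_mono) auto
  also have "\<dots> = (\<Sum>e\<in>A. c e - ch e) * \<pi> + (\<Sum>e\<in>A. (c e - ch e) * \<rho> e)"
    by (simp only: distrib_left sum.distrib sum_distrib_right)
  also have "\<dots> \<le> G * \<pi> + (\<Sum>e\<in>A. D e * \<rho> e)"
    using cb pnn rnn by (intro add_mono mult_right_mono sum_mono) auto
  finally show ?thesis by simp
qed

locale inst =
  fixes V :: "nat set" and A :: "arc set" and s t k :: nat and nb :: nbh
  assumes fV: "finite V" and AV: "A \<subseteq> V \<times> V" and sV: "s \<in> V" and tV: "t \<in> V" and st: "s \<noteq> t"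
    and PNE: "Paths A s t \<noteq> {}"
begin

definition "n = card V"
definition "m = card A"
definition "np = m + 2"
definition "vl = sorted_list_of_set V"
definition "al = (SOME l. set l = A \<and> distinct l)"
definition "PL = [0..<np]"
definition "JL = [1..<np]"
definition "IL = [0..<n]"
definition "IL1 = [0..<n-1]"

lemma np_gt[simp]: "0 < np" "Suc 0 < np" "1 < np" by (simp_all add: np_def)

lemma n_pos[simp]: "0 < n" using fV sV card_gt_0_iff n_def by auto

lemma fA: "finite A" using fV AV finite_subset[of A "V \<times> V"] by auto

lemma al: "set al = A" "distinct al"
proof -
  have "\<exists>l. set l = A \<and> distinct l" using fA finite_distinct_list by auto
  then show "set al = A" "distinct al" unfolding al_def by (metis (mono_tags, lifting) someI_ex)+
qed

lemma vl: "set vl = V" "distinct vl" using fV by (auto simp: vl_def)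

lemma len: "length vl = n" "length al = m" "length PL = np" "length JL = m + 1" "length IL = n" "length IL1 = n - 1"
proof -
  show "length vl = n" using vl distinct_card[of vl] by (simp add: n_def)
  show "length al = m" using al distinct_card[of al] by (simp add: m_def)
  show "length PL = np" "length IL = n" "length IL1 = n - 1" by (simp_all add: PL_def IL_def IL1_def)
  show "length JL = m + 1" unfolding JL_def np_def by (simp only: length_upt)
qed

lemma sl[simp]: "sum_list (map f vl) = sum f V" "sum_list (map f2 al) = sum f2 A"
  "sum_list (map f3 IL) = sum f3 {..<n}" "sum_list (map f4 IL1) = sum f4 {..<n-1}"
  "sum_list (map f5 JL) = sum f5 {1..<np}" "sum_list (map f6 (filter P al)) = sum f6 {e\<in>A. P e}"
  using vl al by (auto simp: sum_list_distinct_conv_sum_set IL_def IL1_def JL_def atLeast0LessThan)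

lemma sets[simp]: "set vl = V" "set al = A" "set PL = {..<np}" "set JL = {1..<np}" "set IL = {..<n}" "set IL1 = {..<n-1}"
  using vl al by (auto simp: PL_def JL_def IL_def IL1_def)

lemma dists[simp]: "distinct vl" "distinct al" "distinct PL" "distinct JL" "distinct IL" "distinct IL1"
  using vl al by (auto simp: PL_def JL_def IL_def IL1_def)

definition vlist :: "vn list" where
  "vlist = map (\<lambda>(p,i,v). U p i v) (prod3 PL IL vl) @ map (\<lambda>(p,i,e). Ar p i e) (prod3 PL IL1 al)
     @ map (\<lambda>(p,e). Z p e) (List.product PL al) @ map (\<lambda>(j,e). R j e) (List.product JL al) @ map L JL
     @ map (\<lambda>(j,e). Qv j e) (List.product JL al) @ map Yv al @ [Pi] @ map Rho al"

lemma in_vlist: "w \<in> set vlist \<longleftrightarrow> (case w of U p i v \<Rightarrow> p < np \<and> i < n \<and> v \<in> V | Ar p i e \<Rightarrow> p < np \<and> i < n - 1 \<and> e \<in> A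
   | Z p e \<Rightarrow> p < np \<and> e \<in> A | R j e \<Rightarrow> 1 \<le> j \<and> j < np \<and> e \<in> A | L j \<Rightarrow> 1 \<le> j \<and> j < np
   | Qv j e \<Rightarrow> 1 \<le> j \<and> j < np \<and> e \<in> A | Yv e \<Rightarrow> e \<in> A | Pi \<Rightarrow> True | Rho e \<Rightarrow> e \<in> A)"
  by (cases w) (auto simp: vlist_def image_iff)

lemma dist_vlist: "distinct vlist"
  unfolding vlist_def
  by (auto simp: distinct_map distinct_product inj_on_def)

lemma len_vlist: "length vlist = np * n * n + np * (n - 1) * m + np * m + (m+1) * m + (m+1) + (m+1) * m + m + 1 + m"
  unfolding vlist_def by (simp add: len)

definition sumU :: "nat \<Rightarrow> nat \<Rightarrow> (real \<times> vn) list" where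
  "sumU p i = map (\<lambda>v. (1, U p i v)) vl"

definition pathCL :: "nat \<Rightarrow> ((real \<times> vn) list \<times> real) list" where
  "pathCL p =
     map (\<lambda>(i,v). ([(1, U p i v)], 1)) (List.product IL vl) @ map (\<lambda>(i,v). ([(-1, U p i v)], 0)) (List.product IL vl)
   @ map (\<lambda>(i,e). ([(1, Ar p i e)], 1)) (List.product IL1 al) @ map (\<lambda>(i,e). ([(-1, Ar p i e)], 0)) (List.product IL1 al)
   @ map (\<lambda>e. ([(1, Z p e)], 1)) al @ map (\<lambda>e. ([(-1, Z p e)], 0)) al
   @ map (\<lambda>i. (sumU p i, 1)) IL
   @ map (\<lambda>i. leE (sumU p (i+1)) (sumU p i)) IL1
   @ [([(-1, U p 0 s)], -1)]
   @ map (\<lambda>v. (map (\<lambda>i. (1, U p i v)) IL, 1)) vl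
   @ [(negE (map (\<lambda>i. (1, U p i t)) IL), -1)]
   @ map (\<lambda>i. ((1, U p i t) # sumU p (i+1), 1)) IL1
   @ map (\<lambda>(i,e). leE [(1, Ar p i e)] [(1, U p i (fst e))]) (List.product IL1 al)
   @ map (\<lambda>(i,e). leE [(1, Ar p i e)] [(1, U p (i+1) (snd e))]) (List.product IL1 al)
   @ map (\<lambda>(i,w). leE [(1, U p (i+1) w)] (map (\<lambda>e. (1, Ar p i e)) (filter (\<lambda>e. snd e = w) al))) (List.product IL1 vl)
   @ concat (map (\<lambda>e. eqE [(1, Z p e)] (map (\<lambda>i. (1, Ar p i e)) IL1)) al)"

definition satL :: "(vn \<Rightarrow> real) \<Rightarrow> ((real \<times> vn) list \<times> real) list \<Rightarrow> bool" where
  "satL g CL \<longleftrightarrow> (\<forall>c\<in>set CL. evalE g (fst c) \<le> snd c)"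

lemma satL_simps[simp]: "satL g [] = True" "satL g (c # CL) = (evalE g (fst c) \<le> snd c \<and> satL g CL)"
  "satL g (CL1 @ CL2) = (satL g CL1 \<and> satL g CL2)" "satL g (map f xs) = (\<forall>x\<in>set xs. evalE g (fst (f x)) \<le> snd (f x))"
  "satL g (concat (map F xs)) = (\<forall>x\<in>set xs. satL g (F x))"
  by (auto simp: satL_def)

lemma int01: "(x::real) \<in> \<int> \<Longrightarrow> (x \<le> 1 \<and> 0 \<le> x) \<longleftrightarrow> x \<in> {0,1}"
  by (auto elim!: Ints_cases)

lemma pathCL_iff:
  assumes ints: "\<forall>i<n. \<forall>v\<in>V. g (U p i v) \<in> \<int>" "\<forall>i<n-1. \<forall>e\<in>A. g (Ar p i e) \<in> \<int>" "\<forall>e\<in>A. g (Z p e) \<in> \<int>"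
  shows "satL g (pathCL p) \<longleftrightarrow> pathC V A s t n (\<lambda>i v. g (U p i v)) (\<lambda>i e. g (Ar p i e)) (\<lambda>e. g (Z p e))"
proof -
  have lt: "(x < n - 1) = (x + 1 < n)" for x by arith
  have b1: "(g (U p i v) \<le> 1 \<and> 0 \<le> g (U p i v)) = (g (U p i v) = 0 \<or> g (U p i v) = 1)" if "i < n" "v \<in> V" for i v
    using int01[of "g (U p i v)"] ints that by auto
  have b2: "(g (Ar p i e) \<le> 1 \<and> 0 \<le> g (Ar p i e)) = (g (Ar p i e) = 0 \<or> g (Ar p i e) = 1)" if "i + 1 < n" "e \<in> A" for i e
    using int01[of "g (Ar p i e)"] ints that by auto
  have b3: "(g (Z p e) \<le> 1 \<and> 0 \<le> g (Z p e)) = (g (Z p e) = 0 \<or> g (Z p e) = 1)" if "e \<in> A" for e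
    using int01[of "g (Z p e)"] ints that by auto
  have E1: "(\<forall>i<n. \<forall>v\<in>V. g (U p i v) = 0 \<or> g (U p i v) = 1) \<longleftrightarrow>
     ((\<forall>x\<in>{..<n}. \<forall>y\<in>V. g (U p x y) \<le> 1) \<and> (\<forall>x\<in>{..<n}. \<forall>y\<in>V. 0 \<le> g (U p x y)))"
  proof
    assume H: "\<forall>i<n. \<forall>v\<in>V. g (U p i v) = 0 \<or> g (U p i v) = 1"
    show "(\<forall>x\<in>{..<n}. \<forall>y\<in>V. g (U p x y) \<le> 1) \<and> (\<forall>x\<in>{..<n}. \<forall>y\<in>V. 0 \<le> g (U p x y))"
      using H by force
  next
    assume H: "(\<forall>x\<in>{..<n}. \<forall>y\<in>V. g (U p x y) \<le> 1) \<and> (\<forall>x\<in>{..<n}. \<forall>y\<in>V. 0 \<le> g (U p x y))"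
    show "\<forall>i<n. \<forall>v\<in>V. g (U p i v) = 0 \<or> g (U p i v) = 1"
    proof (intro allI impI ballI)
      fix i v assume "i < n" "v \<in> V"
      then show "g (U p i v) = 0 \<or> g (U p i v) = 1" using H b1[of i v] by simp
    qed
  qed
  have E2: "(\<forall>i. i + 1 < n \<longrightarrow> (\<forall>e\<in>A. g (Ar p i e) = 0 \<or> g (Ar p i e) = 1)) \<longleftrightarrow>
     ((\<forall>x\<in>{..<n - 1}. \<forall>y\<in>A. g (Ar p x y) \<le> 1) \<and> (\<forall>x\<in>{..<n - 1}. \<forall>y\<in>A. 0 \<le> g (Ar p x y)))"
  proof
    assume H: "\<forall>i. i + 1 < n \<longrightarrow> (\<forall>e\<in>A. g (Ar p i e) = 0 \<or> g (Ar p i e) = 1)"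
    show "(\<forall>x\<in>{..<n - 1}. \<forall>y\<in>A. g (Ar p x y) \<le> 1) \<and> (\<forall>x\<in>{..<n - 1}. \<forall>y\<in>A. 0 \<le> g (Ar p x y))"
      using H lt by force
  next
    assume H: "(\<forall>x\<in>{..<n - 1}. \<forall>y\<in>A. g (Ar p x y) \<le> 1) \<and> (\<forall>x\<in>{..<n - 1}. \<forall>y\<in>A. 0 \<le> g (Ar p x y))"
    show "\<forall>i. i + 1 < n \<longrightarrow> (\<forall>e\<in>A. g (Ar p i e) = 0 \<or> g (Ar p i e) = 1)"
    proof (intro allI impI ballI)
      fix i e assume "i + 1 < n" "e \<in> A"
      then show "g (Ar p i e) = 0 \<or> g (Ar p i e) = 1" using H b2[of i e] lt[of i] by simp
    qed
  qed
  have E3: "(\<forall>e\<in>A. g (Z p e) = 0 \<or> g (Z p e) = 1) \<longleftrightarrow> ((\<forall>x\<in>A. g (Z p x) \<le> 1) \<and> (\<forall>x\<in>A. 0 \<le> g (Z p x)))"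
  proof
    assume H: "\<forall>e\<in>A. g (Z p e) = 0 \<or> g (Z p e) = 1"
    show "(\<forall>x\<in>A. g (Z p x) \<le> 1) \<and> (\<forall>x\<in>A. 0 \<le> g (Z p x))" using H by force
  next
    assume H: "(\<forall>x\<in>A. g (Z p x) \<le> 1) \<and> (\<forall>x\<in>A. 0 \<le> g (Z p x))"
    show "\<forall>e\<in>A. g (Z p e) = 0 \<or> g (Z p e) = 1" using H b3 by simp
  qed
  have E4: "(\<forall>e\<in>A. g (Z p e) = (\<Sum>i<n - 1. g (Ar p i e))) \<longleftrightarrow>
     (\<forall>x\<in>A. g (Z p x) \<le> (\<Sum>i<n - 1. g (Ar p i x)) \<and> (\<Sum>i<n - 1. g (Ar p i x)) \<le> g (Z p x))"
    by (auto simp: order_antisym_conv)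
  have E5: "(\<forall>i. i + 1 < n \<longrightarrow> Q i) \<longleftrightarrow> (\<forall>x\<in>{..<n - 1}. Q x)" for Q using lt by auto
  have E6: "(\<forall>i<n. Q i) \<longleftrightarrow> (\<forall>x\<in>{..<n}. Q x)" for Q by auto
  have E7: "(\<forall>i. i + 1 < n \<longrightarrow> (\<forall>e\<in>A. P1 i e \<and> P2 i e)) \<longleftrightarrow> (\<forall>x\<in>{..<n - 1}. \<forall>y\<in>A. P1 x y) \<and> (\<forall>x\<in>{..<n - 1}. \<forall>y\<in>A. P2 x y)" for P1 P2
    using lt by auto
  have X: "satL g (pathCL p) = pathC V A s t n (\<lambda>i v. g (U p i v)) (\<lambda>i e. g (Ar p i e)) (\<lambda>e. g (Z p e))"
    unfolding pathCL_def pathC_def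
    apply (simp add: leE_def eqE_def sumU_def case_prod_beta del: One_nat_def)
    apply (simp only: E1 E2 E3 E4 E7 E5 E6 conj_assoc)
    done
  then show ?thesis .
qed


definition nbE :: "nat \<Rightarrow> (real \<times> vn) list" where
  "nbE j = (case nb of Incl \<Rightarrow> concat (map (\<lambda>e. [(1, Z j e), (-1, R j e)]) al)
     | Excl \<Rightarrow> concat (map (\<lambda>e. [(1, Z 0 e), (-1, R j e)]) al)
     | Sym \<Rightarrow> concat (map (\<lambda>e. [(1, Z 0 e), (1, Z j e), (-2, R j e)]) al))"

definition nbval :: "(vn \<Rightarrow> real) \<Rightarrow> nat \<Rightarrow> real" where
  "nbval g j = (case nb of Incl \<Rightarrow> (\<Sum>e\<in>A. g (Z j e) - g (R j e))
     | Excl \<Rightarrow> (\<Sum>e\<in>A. g (Z 0 e) - g (R j e))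
     | Sym \<Rightarrow> (\<Sum>e\<in>A. g (Z 0 e) + g (Z j e) - 2 * g (R j e)))"

lemma evalE_nbE: "evalE g (nbE j) = nbval g j"
  unfolding nbE_def nbval_def by (cases nb) (auto simp: algebra_simps)

definition recCL :: "((real \<times> vn) list \<times> real) list" where
  "recCL = concat (map (\<lambda>(j,e). [leE [(1,R j e)] [(1,Z 0 e)], leE [(1,R j e)] [(1,Z j e)], ([(1,Z 0 e),(1,Z j e),(-1,R j e)], 1),
        ([(-1,R j e)], 0), leE [(1,Qv j e)] [(1,L j)], leE [(1,Qv j e)] [(1,Z j e)], ([(1,L j),(1,Z j e),(-1,Qv j e)], 1),
        ([(-1,Qv j e)], 0)]) (List.product JL al))
   @ map (\<lambda>j. (nbE j, real k)) JL
   @ map (\<lambda>j. ([(-1, L j)], 0)) JL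
   @ [(map (\<lambda>j. (1, L j)) JL, 1), (negE (map (\<lambda>j. (1, L j)) JL), -1)]
   @ concat (map (\<lambda>e. eqE [(1, Yv e)] (map (\<lambda>j. (1, Qv j e)) JL)) al)
   @ [([(-1, Pi)], 0)]
   @ map (\<lambda>e. ([(-1, Rho e)], 0)) al
   @ map (\<lambda>e. ([(1, Yv e), (-1, Pi), (-1, Rho e)], 0)) al"

definition recC :: "(vn \<Rightarrow> real) \<Rightarrow> bool" where
  "recC g \<longleftrightarrow> (\<forall>j\<in>{1..<np}. \<forall>e\<in>A. g (R j e) \<le> g (Z 0 e) \<and> g (R j e) \<le> g (Z j e) \<and> g (Z 0 e) + g (Z j e) - 1 \<le> g (R j e)
         \<and> 0 \<le> g (R j e) \<and> g (Qv j e) \<le> g (L j) \<and> g (Qv j e) \<le> g (Z j e) \<and> g (L j) + g (Z j e) - 1 \<le> g (Qv j e)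
         \<and> 0 \<le> g (Qv j e))
    \<and> (\<forall>j\<in>{1..<np}. nbval g j \<le> real k)
    \<and> (\<forall>j\<in>{1..<np}. 0 \<le> g (L j)) \<and> (\<Sum>j\<in>{1..<np}. g (L j)) = 1
    \<and> (\<forall>e\<in>A. g (Yv e) = (\<Sum>j\<in>{1..<np}. g (Qv j e)))
    \<and> 0 \<le> g Pi \<and> (\<forall>e\<in>A. 0 \<le> g (Rho e)) \<and> (\<forall>e\<in>A. g (Yv e) \<le> g Pi + g (Rho e))"

lemma recCL_iff: "satL g recCL \<longleftrightarrow> recC g"
  unfolding recCL_def recC_def
  apply (simp add: leE_def eqE_def evalE_nbE case_prod_beta ball_conj_distrib)
  apply (auto simp: algebra_simps)
  apply (meson order_antisym)
  done


definition CL :: "((real \<times> vn) list \<times> real) list" where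
  "CL = concat (map pathCL PL) @ recCL"

definition intC :: "(vn \<Rightarrow> real) \<Rightarrow> bool" where
  "intC g \<longleftrightarrow> (\<forall>w\<in>set vlist. isInt w \<longrightarrow> g w \<in> \<int>)"

definition feasG :: "(vn \<Rightarrow> real) \<Rightarrow> bool" where
  "feasG g \<longleftrightarrow> intC g \<and> satL g CL"

definition semC :: "(vn \<Rightarrow> real) \<Rightarrow> bool" where
  "semC g \<longleftrightarrow> (\<forall>p<np. pathC V A s t n (\<lambda>i v. g (U p i v)) (\<lambda>i e. g (Ar p i e)) (\<lambda>e. g (Z p e))) \<and> recC g"

lemma intC_iff: "intC g \<longleftrightarrow> (\<forall>p<np. (\<forall>i<n. \<forall>v\<in>V. g (U p i v) \<in> \<int>) \<and> (\<forall>i<n-1. \<forall>e\<in>A. g (Ar p i e) \<in> \<int>) \<and> (\<forall>e\<in>A. g (Z p e) \<in> \<int>))"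
proof
  assume "intC g"
  then have I: "g w \<in> \<int>" if "w \<in> set vlist" "isInt w" for w using that unfolding intC_def by blast
  show "\<forall>p<np. (\<forall>i<n. \<forall>v\<in>V. g (U p i v) \<in> \<int>) \<and> (\<forall>i<n-1. \<forall>e\<in>A. g (Ar p i e) \<in> \<int>) \<and> (\<forall>e\<in>A. g (Z p e) \<in> \<int>)"
  proof (intro allI impI conjI ballI)
    fix p i v assume "p < np" "i < n" "v \<in> V" then show "g (U p i v) \<in> \<int>" using I[of "U p i v"] by (simp add: in_vlist)
  next
    fix p i e assume "p < np" "i < n - 1" "e \<in> A" then show "g (Ar p i e) \<in> \<int>" using I[of "Ar p i e"] by (simp add: in_vlist)
  next
    fix p e assume "p < np" "e \<in> A" then show "g (Z p e) \<in> \<int>" using I[of "Z p e"] by (simp add: in_vlist)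
  qed
next
  assume H: "\<forall>p<np. (\<forall>i<n. \<forall>v\<in>V. g (U p i v) \<in> \<int>) \<and> (\<forall>i<n-1. \<forall>e\<in>A. g (Ar p i e) \<in> \<int>) \<and> (\<forall>e\<in>A. g (Z p e) \<in> \<int>)"
  show "intC g" unfolding intC_def
  proof (intro ballI impI)
    fix w assume W: "w \<in> set vlist" "isInt w"
    note C = W(1)[unfolded in_vlist]
    show "g w \<in> \<int>" using C W(2) H by (cases w) auto
  qed
qed

lemma bin_int: "(x::real) \<in> {0,1} \<Longrightarrow> x \<in> \<int>" by auto

lemma pathC_bin: "pathC V A s t n u a z \<Longrightarrow> (\<forall>i<n. \<forall>v\<in>V. u i v \<in> {0,1}) \<and> (\<forall>i. i+1<n \<longrightarrow> (\<forall>e\<in>A. a i e \<in> {0,1})) \<and> (\<forall>e\<in>A. z e \<in> {0,1})"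
  unfolding pathC_def by blast

lemma feasG_iff: "feasG g \<longleftrightarrow> semC g"
proof
  assume F: "feasG g"
  then have I: "intC g" and S: "satL g CL" unfolding feasG_def by auto
  have "pathC V A s t n (\<lambda>i v. g (U p i v)) (\<lambda>i e. g (Ar p i e)) (\<lambda>e. g (Z p e))" if p: "p < np" for p
  proof -
    have "satL g (pathCL p)" using S p unfolding CL_def by (auto simp: satL_def)
    then show ?thesis using pathCL_iff I p unfolding intC_iff by blast
  qed
  moreover have "recC g" using S recCL_iff unfolding CL_def by simp
  ultimately show "semC g" unfolding semC_def by blast
next
  assume H: "semC g"
  have P: "pathC V A s t n (\<lambda>i v. g (U p i v)) (\<lambda>i e. g (Ar p i e)) (\<lambda>e. g (Z p e))" if "p < np" for p
    using H that unfolding semC_def by blast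
  have I: "intC g" unfolding intC_iff
  proof (intro allI impI)
    fix p assume p: "p < np"
    note pc = pathC_bin[OF P[OF p]]
    have 1: "\<forall>i<n. \<forall>v\<in>V. g (U p i v) \<in> \<int>" using pc bin_int by blast
    have 2: "\<forall>i<n-1. \<forall>e\<in>A. g (Ar p i e) \<in> \<int>" using pc bin_int by (simp add: less_diff_conv)
    have 3: "\<forall>e\<in>A. g (Z p e) \<in> \<int>" using pc bin_int by blast
    show "(\<forall>i<n. \<forall>v\<in>V. g (U p i v) \<in> \<int>) \<and> (\<forall>i<n-1. \<forall>e\<in>A. g (Ar p i e) \<in> \<int>) \<and> (\<forall>e\<in>A. g (Z p e) \<in> \<int>)"
      using 1 2 3 by blast
  qed
  have "satL g (pathCL p)" if "p < np" for p using pathCL_iff[of g p] I P that unfolding intC_iff by blast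
  moreover have "satL g recCL" using H recCL_iff unfolding semC_def by simp
  ultimately show "feasG g" unfolding feasG_def CL_def using I by (auto simp: satL_def)
qed


definition idx :: "vn \<Rightarrow> nat" where "idx w = (THE i. i < length vlist \<and> vlist!i = w)"

lemma idx: "w \<in> set vlist \<Longrightarrow> idx w < length vlist \<and> vlist ! (idx w) = w"
proof -
  assume "w \<in> set vlist"
  then obtain k where k: "k < length vlist" "vlist!k = w" by (auto simp: in_set_conv_nth)
  have "idx w = k" unfolding idx_def using k dist_vlist by (auto intro!: the_equality simp: nth_eq_iff_index_eq)
  then show ?thesis using k by simp
qed

lemma idx_nth: "i < length vlist \<Longrightarrow> idx (vlist!i) = i"
  unfolding idx_def using dist_vlist by (auto intro!: the_equality simp: nth_eq_iff_index_eq)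

definition Eobj :: "(arc \<Rightarrow> real) \<Rightarrow> (arc \<Rightarrow> real) \<Rightarrow> (arc \<Rightarrow> real) \<Rightarrow> real \<Rightarrow> (real \<times> vn) list" where
  "Eobj C ch D G = map (\<lambda>e. (C e, Z 0 e)) al @ map (\<lambda>e. (ch e, Yv e)) al @ [(G, Pi)] @ map (\<lambda>e. (D e, Rho e)) al"

definition objG :: "(arc \<Rightarrow> real) \<Rightarrow> (arc \<Rightarrow> real) \<Rightarrow> (arc \<Rightarrow> real) \<Rightarrow> real \<Rightarrow> (vn \<Rightarrow> real) \<Rightarrow> real" where
  "objG C ch D G g = (\<Sum>e\<in>A. C e * g (Z 0 e)) + (\<Sum>e\<in>A. ch e * g (Yv e)) + G * g Pi + (\<Sum>e\<in>A. D e * g (Rho e))"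

lemma evalE_Eobj: "evalE g (Eobj C ch D G) = objG C ch D G g"
  unfolding Eobj_def objG_def by simp

lemma coefE_map: "coefE (map (\<lambda>x. (cn x, wn x)) xs) w = sum_list (map (\<lambda>x. if wn x = w then cn x else 0) xs)"
  unfolding coefE_def by (simp add: comp_def)

lemma coefE_app: "coefE (E1 @ E2) w = coefE E1 w + coefE E2 w" "coefE ((c,w')#E) w = (if w' = w then c else 0) + coefE E w"
  "coefE [] w = 0"
  unfolding coefE_def by auto

lemma ocoef_eval: "w \<in> set vlist \<Longrightarrow> aff_eval A C ch D G (ocoef w) = coefE (Eobj C ch D G) w"
proof -
  assume w: "w \<in> set vlist"
  have d1: "(\<Sum>e'\<in>A. dl e e' * f e') = f e" if "e \<in> A" for e and f :: "arc \<Rightarrow> real"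
  proof -
    have "(\<Sum>e'\<in>A. dl e e' * f e') = (\<Sum>e'\<in>A. if e' = e then f e else 0)" by (rule sum.cong) (auto simp: dl_def)
    then show ?thesis using that fA by simp
  qed
  have d2: "(\<Sum>e'\<in>A. if P e' then (0::real) else 0) = 0" for P by simp
  show ?thesis
  proof (cases w)
    case (Z p e)
    then have e: "e \<in> A" using w in_vlist by auto
    show ?thesis
    proof (cases "p = 0")
      case True
      have "(\<Sum>e'\<in>A. if Z 0 e' = Z 0 e then C e' else 0) = (\<Sum>e'\<in>A. if e' = e then C e else 0)" by (rule sum.cong) auto
      then show ?thesis using Z True e d1[OF e, of C] fA
        by (simp add: Eobj_def coefE_app coefE_map)
    next
      case False then show ?thesis using Z by (simp add: Eobj_def coefE_app coefE_map)
    qed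
  next
    case (Yv e)
    then have e: "e \<in> A" using w in_vlist by auto
    have "(\<Sum>e'\<in>A. if Yv e' = Yv e then ch e' else 0) = (\<Sum>e'\<in>A. if e' = e then ch e else 0)" by (rule sum.cong) auto
    then show ?thesis using Yv e d1[OF e, of ch] fA by (simp add: Eobj_def coefE_app coefE_map)
  next
    case (Rho e)
    then have e: "e \<in> A" using w in_vlist by auto
    have "(\<Sum>e'\<in>A. if Rho e' = Rho e then D e' else 0) = (\<Sum>e'\<in>A. if e' = e then D e else 0)" by (rule sum.cong) auto
    then show ?thesis using Rho e d1[OF e, of D] fA by (simp add: Eobj_def coefE_app coefE_map)
  next
    case Pi then show ?thesis by (simp add: Eobj_def coefE_app coefE_map)
  qed (simp_all add: Eobj_def coefE_app coefE_map)
qed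

lemma names_Eobj: "names (Eobj C ch D G) \<subseteq> set vlist"
  unfolding Eobj_def by (auto simp: in_vlist)


lemma AVe: "e \<in> A \<Longrightarrow> fst e \<in> V \<and> snd e \<in> V" using AV by auto

lemma names_CL: "\<forall>c\<in>set CL. names (fst c) \<subseteq> set vlist"
proof -
  have p: "\<forall>c\<in>set (pathCL p). names (fst c) \<subseteq> set vlist" if "p < np" for p
    using that sV tV AVe unfolding pathCL_def
    by (auto simp: in_vlist leE_def eqE_def sumU_def less_diff_conv)
  have r: "\<forall>c\<in>set recCL. names (fst c) \<subseteq> set vlist"
    unfolding recCL_def by (auto simp: in_vlist leE_def eqE_def nbE_def split: nbh.splits)
  show ?thesis unfolding CL_def using p r by auto
qed

definition T :: mip_template where
  "T = \<lparr> tnvars = length vlist, tivars = {i. i < length vlist \<and> isInt (vlist!i)},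
         tobj = (\<lambda>i. ocoef (vlist!i)),
         tcons = map (\<lambda>(E,b). ((\<lambda>i. cst (coefE E (vlist!i))), cst b)) CL,
         tidx = (\<lambda>e. idx (Z 0 e)) \<rparr>"

lemma T_wf: "template_wf A T"
  unfolding template_wf_def T_def
proof (simp, intro conjI)
  show "{i. i < length vlist \<and> isInt (vlist ! i)} \<subseteq> {..<length vlist}" by auto
  show "inj_on (\<lambda>e. idx (Z 0 e)) A"
  proof (rule inj_onI)
    fix e e' assume "e \<in> A" "e' \<in> A" "idx (Z 0 e) = idx (Z 0 e')"
    then have "vlist ! idx (Z 0 e) = vlist ! idx (Z 0 e')" by simp
    then show "e = e'" using idx[of "Z 0 e"] idx[of "Z 0 e'"] \<open>e \<in> A\<close> \<open>e' \<in> A\<close> by (simp add: in_vlist)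
  qed
  show "\<forall>e\<in>A. idx (Z 0 e) < length vlist" using idx by (simp add: in_vlist)
qed

lemma val_bridge: "mip_val (instantiate A T C ch D G) x = objG C ch D G (\<lambda>w. x (idx w))"
proof -
  have "mip_val (instantiate A T C ch D G) x = (\<Sum>i<length vlist. coefE (Eobj C ch D G) (vlist!i) * x i)"
    unfolding mip_val_def instantiate_def T_def by (simp add: ocoef_eval)
  also have "\<dots> = evalE (\<lambda>w. x (idx w)) (Eobj C ch D G)"
    unfolding idx_def by (rule coef_bridge[OF dist_vlist names_Eobj])
  finally show ?thesis by (simp add: evalE_Eobj)
qed

lemma feas_bridge: "mip_feasible (instantiate A T C ch D G) x \<longleftrightarrow> feasG (\<lambda>w. x (idx w))"
proof -
  have c: "(\<forall>(a, b)\<in>set (mcons (instantiate A T C ch D G)). (\<Sum>i<nvars (instantiate A T C ch D G). a i * x i) \<le> b)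
     \<longleftrightarrow> satL (\<lambda>w. x (idx w)) CL"
  proof -
    have e: "(\<Sum>i<length vlist. coefE E (vlist!i) * x i) = evalE (\<lambda>w. x (idx w)) E" if "(E,b) \<in> set CL" for E b
      unfolding idx_def using coef_bridge[OF dist_vlist] names_CL that by fastforce
    show ?thesis unfolding instantiate_def T_def satL_def using e by (force simp: case_prod_beta)
  qed
  have i: "(\<forall>i\<in>ivars (instantiate A T C ch D G). x i \<in> \<int>) \<longleftrightarrow> intC (\<lambda>w. x (idx w))"
  proof
    assume H: "\<forall>i\<in>ivars (instantiate A T C ch D G). x i \<in> \<int>"
    show "intC (\<lambda>w. x (idx w))" unfolding intC_def
    proof (intro ballI impI)
      fix w assume "w \<in> set vlist" "isInt w"
      then show "x (idx w) \<in> \<int>" using H idx[of w] unfolding instantiate_def T_def by auto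
    qed
  next
    assume H: "intC (\<lambda>w. x (idx w))"
    show "\<forall>i\<in>ivars (instantiate A T C ch D G). x i \<in> \<int>" unfolding instantiate_def T_def
    proof (simp, intro allI impI)
      fix i assume "i < length vlist \<and> isInt (vlist!i)"
      then show "x i \<in> \<int>" using H idx_nth[of i] unfolding intC_def by (metis nth_mem)
    qed
  qed
  show ?thesis unfolding mip_feasible_def feasG_def using c i by blast
qed

lemma read_bridge: "read_path A T x = {e\<in>A. x (idx (Z 0 e)) = 1}"
  unfolding read_path_def T_def by simp

lemma size_T: "template_size T = length vlist + length CL"
  unfolding template_size_def T_def by simp


lemma evalE_cong: "names E \<subseteq> set vlist \<Longrightarrow> \<forall>w\<in>set vlist. g w = g' w \<Longrightarrow> evalE g E = evalE g' E"
  by (induction E) (auto simp: evalE_def names_def)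

lemma feasG_cong: assumes "\<forall>w\<in>set vlist. g w = g' w" shows "feasG g = feasG g'"
proof -
  have "satL g CL = satL g' CL" unfolding satL_def using names_CL evalE_cong[OF _ assms] by auto
  moreover have "intC g = intC g'" unfolding intC_def using assms by auto
  ultimately show ?thesis unfolding feasG_def by simp
qed

lemma objG_cong: assumes "\<forall>w\<in>set vlist. g w = g' w" shows "objG C ch D G g = objG C ch D G g'"
  using evalE_cong[OF names_Eobj assms] by (simp add: evalE_Eobj)

lemma realize: "\<forall>w\<in>set vlist. (\<lambda>w. (\<lambda>i. g (vlist ! i)) (idx w)) w = g w"
  using idx by auto

lemma finite_Paths: "finite (Paths A s t)"
proof -
  have "Paths A s t \<subseteq> Pow A" unfolding Paths_def is_simple_path_def by auto
  then show ?thesis using fA finite_subset by blast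
qed

lemma Paths_sub: "Y \<in> Paths A s t \<Longrightarrow> Y \<subseteq> A"
  unfolding Paths_def is_simple_path_def by auto

lemma Nbh_sub: "Nbh nb A s t X k \<subseteq> Paths A s t"
  unfolding Nbh_def by (cases nb) auto

lemma Nbh_self: "X \<in> Paths A s t \<Longrightarrow> X \<in> Nbh nb A s t X k"
  unfolding Nbh_def by (cases nb) auto

lemma card_ind: "S \<subseteq> A \<Longrightarrow> (\<Sum>e\<in>A. ind e S) = real (card S)"
  using sum_ind[OF fA, of S "\<lambda>_. 1"] by simp

lemma nb_ind: "X \<subseteq> A \<Longrightarrow> Y \<in> Paths A s t \<Longrightarrow>
  (case nb of Incl \<Rightarrow> (\<Sum>e\<in>A. ind e Y - ind e X * ind e Y) | Excl \<Rightarrow> (\<Sum>e\<in>A. ind e X - ind e X * ind e Y)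
     | Sym \<Rightarrow> (\<Sum>e\<in>A. ind e X + ind e Y - 2 * (ind e X * ind e Y))) \<le> real k \<longleftrightarrow> Y \<in> Nbh nb A s t X k"
proof -
  assume X: "X \<subseteq> A" and YP: "Y \<in> Paths A s t"
  have Y: "Y \<subseteq> A" using Paths_sub[OF YP] .
  have p1: "ind e Y - ind e X * ind e Y = ind e (Y - X)" for e by (simp add: ind_def)
  have p2: "ind e X - ind e X * ind e Y = ind e (X - Y)" for e by (simp add: ind_def)
  have p3: "ind e X + ind e Y - 2 * (ind e X * ind e Y) = ind e ((Y - X) \<union> (X - Y))" for e by (simp add: ind_def)
  have 1: "(\<Sum>e\<in>A. ind e Y - ind e X * ind e Y) = real (card (Y - X))"
    unfolding p1 using card_ind[of "Y - X"] Y by auto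
  have 2: "(\<Sum>e\<in>A. ind e X - ind e X * ind e Y) = real (card (X - Y))"
    unfolding p2 using card_ind[of "X - Y"] X by auto
  have 3: "(\<Sum>e\<in>A. ind e X + ind e Y - 2 * (ind e X * ind e Y)) = real (card ((Y - X) \<union> (X - Y)))"
    unfolding p3 using card_ind[of "(Y - X) \<union> (X - Y)"] X Y by auto
  show ?thesis using 1 2 3 YP unfolding Nbh_def by (cases nb) auto
qed


lemma Ucont_ne: "\<forall>e\<in>A. 0 \<le> D e \<Longrightarrow> 0 \<le> G \<Longrightarrow> ch \<in> Ucont A ch D G"
  unfolding Ucont_def by auto

lemma lower:
  assumes sem: "semC g" and nn: "\<forall>e\<in>A. 0 \<le> C e \<and> 0 \<le> ch e \<and> 0 \<le> D e" and G0: "0 \<le> G"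
  shows "{e\<in>A. g (Z 0 e) = 1} \<in> Paths A s t \<and> rr_obj nb A s t k C ch D G {e\<in>A. g (Z 0 e) = 1} \<le> objG C ch D G g"
proof -
  define Xp where "Xp p = {e\<in>A. g (Z p e) = 1}" for p
  define X where "X = Xp 0"
  define J where "J = {1..<np}"
  have pc: "pathC V A s t n (\<lambda>i v. g (U p i v)) (\<lambda>i e. g (Ar p i e)) (\<lambda>e. g (Z p e))" if "p < np" for p
    using sem that unfolding semC_def by blast
  have XpP: "Xp p \<in> Paths A s t" if "p < np" for p
    unfolding Xp_def using path_extract[OF fV AV sV tV n_def pc[OF that]] .
  have zind: "g (Z p e) = ind e (Xp p)" if "p < np" "e \<in> A" for p e
    using pathC_bin[OF pc[OF that(1)]] that(2) unfolding Xp_def ind_def by auto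
  have rc: "recC g" using sem unfolding semC_def by blast
  note rcd = rc[unfolded recC_def]
  have XP: "X \<in> Paths A s t" using XpP[of 0] unfolding X_def by simp
  have XA: "X \<subseteq> A" using Paths_sub[OF XP] .
  have Rf: "g (R j e) = ind e X * ind e (Xp j)" if j: "j \<in> J" and e: "e \<in> A" for j e
  proof -
    have j': "j < np" using j unfolding J_def by auto
    have h: "g (R j e) \<le> g (Z 0 e)" "g (R j e) \<le> g (Z j e)" "g (Z 0 e) + g (Z j e) - 1 \<le> g (R j e)" "0 \<le> g (R j e)"
      using rcd j e unfolding J_def by auto
    then show ?thesis using zind[of 0 e] zind[OF j' e] e unfolding X_def ind_def by (auto split: if_splits)
  qed
  have Qf: "g (Qv j e) = g (L j) * ind e (Xp j)" if j: "j \<in> J" and e: "e \<in> A" for j e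
  proof -
    have j': "j < np" using j unfolding J_def by auto
    have h: "g (Qv j e) \<le> g (L j)" "g (Qv j e) \<le> g (Z j e)" "g (L j) + g (Z j e) - 1 \<le> g (Qv j e)" "0 \<le> g (Qv j e)"
      using rcd j e unfolding J_def by auto
    then show ?thesis using zind[OF j' e] unfolding ind_def by (auto split: if_splits)
  qed
  have inNbh: "Xp j \<in> Nbh nb A s t X k" if j: "j \<in> J" for j
  proof -
    have j': "j < np" using j unfolding J_def by auto
    have "nbval g j \<le> real k" using rcd j unfolding J_def by auto
    moreover have "nbval g j = (case nb of Incl \<Rightarrow> (\<Sum>e\<in>A. ind e (Xp j) - ind e X * ind e (Xp j))
        | Excl \<Rightarrow> (\<Sum>e\<in>A. ind e X - ind e X * ind e (Xp j))
        | Sym \<Rightarrow> (\<Sum>e\<in>A. ind e X + ind e (Xp j) - 2 * (ind e X * ind e (Xp j))))"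
      unfolding nbval_def using zind[of 0] zind[OF j'] Rf[OF j] unfolding X_def
      by (cases nb) (auto intro!: sum.cong)
    ultimately show ?thesis using nb_ind[OF XA XpP[OF j']] by simp
  qed
  define \<Phi> where "\<Phi> = Nbh nb A s t X k"
  have fPhi: "finite \<Phi>" unfolding \<Phi>_def using finite_Paths Nbh_sub finite_subset by blast
  have subPhi: "\<forall>Y\<in>\<Phi>. Y \<subseteq> A" unfolding \<Phi>_def using Nbh_sub Paths_sub by blast
  have yeq: "g (Yv e) = (\<Sum>j\<in>J. g (L j) * ind e (Xp j))" if "e \<in> A" for e
    using rcd that Qf unfolding J_def by auto
  let ?RHS = "(\<Sum>e\<in>A. ch e * g (Yv e)) + G * g Pi + (\<Sum>e\<in>A. D e * g (Rho e))"
  have bnd: "mval c \<Phi> \<le> ?RHS" if c: "c \<in> Ucont A ch D G" for c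
  proof -
    have "mval c \<Phi> \<le> (\<Sum>e\<in>A. ch e * (\<Sum>j\<in>J. g (L j) * ind e (Xp j))) + G * g Pi + (\<Sum>e\<in>A. D e * g (Rho e))"
    proof (rule mm_weak_idx[OF fA _ fPhi _ subPhi _ _ _ _ _ c])
      show "finite J" unfolding J_def by simp
      show "\<forall>j\<in>J. Xp j \<in> \<Phi>" using inNbh unfolding \<Phi>_def by blast
      show "\<forall>j\<in>J. 0 \<le> g (L j)" "(\<Sum>j\<in>J. g (L j)) = 1" "0 \<le> g Pi" "\<forall>e\<in>A. 0 \<le> g (Rho e)"
        using rcd unfolding J_def by auto
      show "\<forall>e\<in>A. (\<Sum>j\<in>J. g (L j) * ind e (Xp j)) \<le> g Pi + g (Rho e)" using rcd yeq by auto
    qed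
    also have "\<dots> = ?RHS" using yeq by simp
    finally show ?thesis .
  qed
  have sup: "(SUP c\<in>Ucont A ch D G. mval c \<Phi>) \<le> ?RHS"
    using Ucont_ne[of D G ch] nn G0 bnd by (intro cSUP_least) auto
  have cx: "(\<Sum>e\<in>X. C e) = (\<Sum>e\<in>A. C e * g (Z 0 e))"
  proof -
    have "(\<Sum>e\<in>A. C e * g (Z 0 e)) = (\<Sum>e\<in>A. ind e X * C e)"
      using zind[of 0] unfolding X_def by (intro sum.cong) auto
    then show ?thesis using sum_ind[OF fA XA] by simp
  qed
  have "rr_obj nb A s t k C ch D G X = (\<Sum>e\<in>X. C e) + (SUP c\<in>Ucont A ch D G. mval c \<Phi>)"
    unfolding rr_obj_def \<Phi>_def mval_def by simp
  also have "\<dots> \<le> objG C ch D G g" using sup cx unfolding objG_def by simp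
  finally show ?thesis using XP unfolding X_def Xp_def by simp
qed


lemma upper:
  assumes nn: "\<forall>e\<in>A. 0 \<le> C e \<and> 0 \<le> ch e \<and> 0 \<le> D e" and G0: "0 \<le> G"
  shows "\<exists>g. semC g \<and> objG C ch D G g \<le> rr_opt nb A s t k C ch D G"
proof -
  have "rr_opt nb A s t k C ch D G \<in> rr_obj nb A s t k C ch D G ` Paths A s t"
    unfolding rr_opt_def using finite_Paths PNE by (intro Min_in) auto
  then obtain Xs where XsP: "Xs \<in> Paths A s t" and Xopt: "rr_obj nb A s t k C ch D G Xs = rr_opt nb A s t k C ch D G"
    by auto
  have XsA: "Xs \<subseteq> A" using Paths_sub[OF XsP] .
  define \<Phi> where "\<Phi> = Nbh nb A s t Xs k"
  have fPhi: "finite \<Phi>" unfolding \<Phi>_def using finite_Paths Nbh_sub finite_subset by blast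
  have PhiNE: "\<Phi> \<noteq> {}" using Nbh_self[OF XsP] unfolding \<Phi>_def by blast
  have subPhi: "\<forall>Y\<in>\<Phi>. Y \<subseteq> A" unfolding \<Phi>_def using Nbh_sub Paths_sub by blast
  have nn': "\<forall>e\<in>A. 0 \<le> ch e \<and> 0 \<le> D e" using nn by auto
  obtain Q lam \<pi> \<rho> where Q: "Q \<subseteq> \<Phi>" "card Q \<le> card A + 1" "\<forall>Y\<in>Q. 0 \<le> lam Y" "(\<Sum>Y\<in>Q. lam Y) = 1"
    "0 \<le> \<pi>" "\<forall>e\<in>A. 0 \<le> \<rho> e" "\<forall>e\<in>A. (\<Sum>Y\<in>Q. lam Y * ind e Y) \<le> \<pi> + \<rho> e"
    "(\<Sum>e\<in>A. ch e * (\<Sum>Y\<in>Q. lam Y * ind e Y)) + G * \<pi> + (\<Sum>e\<in>A. D e * \<rho> e) \<le> (SUP c\<in>Ucont A ch D G. mval c \<Phi>)"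
    using mm_strong[OF fA fPhi PhiNE subPhi nn' G0] by blast
  have fQ: "finite Q" using Q(1) fPhi finite_subset by blast
  obtain qs where qs: "distinct qs" "set qs = Q" using finite_distinct_list[OF fQ] by blast
  have lenqs: "length qs \<le> m + 1" using Q(2) distinct_card[OF qs(1)] qs(2) unfolding m_def by simp
  have lam1: "lam Y \<le> 1" if "Y \<in> Q" for Y
  proof -
    have "lam Y \<le> (\<Sum>Y\<in>Q. lam Y)" using fQ Q(3) that by (intro member_le_sum) auto
    then show ?thesis using Q(4) by simp
  qed
  define Yj where "Yj j = (if j - 1 < length qs then qs ! (j - 1) else Xs)" for j
  define lj where "lj j = (if j - 1 < length qs then lam (qs ! (j - 1)) else 0)" for j
  define pth where "pth p = (if p = 0 then Xs else Yj p)" for p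
  have YjN: "Yj j \<in> \<Phi>" for j
    unfolding Yj_def using Q(1) qs(2) Nbh_self[OF XsP] unfolding \<Phi>_def by auto
  have pthP: "pth p \<in> Paths A s t" for p
    unfolding pth_def using XsP YjN Nbh_sub unfolding \<Phi>_def by auto
  have lj01: "0 \<le> lj j \<and> lj j \<le> 1" for j
    unfolding lj_def using Q(3) lam1 qs(2) by auto
  have shift: "(\<Sum>j\<in>{1..<np}. lj j * h (Yj j)) = (\<Sum>Y\<in>Q. lam Y * h Y)" for h :: "arc set \<Rightarrow> real"
  proof -
    have "(\<Sum>j\<in>{1..<np}. lj j * h (Yj j)) = (\<Sum>i\<in>{0..<m+1}. lj (Suc i) * h (Yj (Suc i)))"
      unfolding np_def using sum.shift_bounds_Suc_ivl[of "\<lambda>j. lj j * h (Yj j)" 0 "m+1"] by simp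
    also have "\<dots> = (\<Sum>i\<in>{0..<m+1}. if i < length qs then lam (qs!i) * h (qs!i) else 0)"
      unfolding lj_def Yj_def by (rule sum.cong) auto
    also have "\<dots> = (\<Sum>i\<in>{0..<length qs}. lam (qs!i) * h (qs!i))"
    proof -
      have "{0..<m+1} = {0..<length qs} \<union> {length qs..<m+1}" using lenqs by auto
      then show ?thesis by (simp add: sum.union_disjoint)
    qed
    also have "\<dots> = sum_list (map (\<lambda>Y. lam Y * h Y) qs)"
      by (simp add: sum_list_sum_nth atLeast0LessThan)
    also have "\<dots> = (\<Sum>Y\<in>Q. lam Y * h Y)" using qs by (simp add: sum_list_distinct_conv_sum_set)
    finally show ?thesis .
  qed
  define PU where "PU p = (SOME ua. pathC V A s t n (fst ua) (snd ua) (\<lambda>e. if e \<in> pth p then 1 else 0))" for p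
  have PUc: "pathC V A s t n (fst (PU p)) (snd (PU p)) (\<lambda>e. if e \<in> pth p then 1 else 0)" for p
  proof -
    obtain u a where "pathC V A s t n u a (\<lambda>e. if e \<in> pth p then 1 else 0)"
      using path_construct[OF fV AV sV tV n_def pthP[of p]] by blast
    then have "\<exists>ua. pathC V A s t n (fst ua) (snd ua) (\<lambda>e. if e \<in> pth p then 1 else 0)" by (intro exI[of _ "(u,a)"]) simp
    then show ?thesis unfolding PU_def by (rule someI_ex)
  qed
  define g where "g w = (case w of U p i v \<Rightarrow> fst (PU p) i v | Ar p i e \<Rightarrow> snd (PU p) i e | Z p e \<Rightarrow> ind e (pth p)
     | R j e \<Rightarrow> ind e Xs * ind e (Yj j) | L j \<Rightarrow> lj j | Qv j e \<Rightarrow> lj j * ind e (Yj j)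
     | Yv e \<Rightarrow> (\<Sum>j\<in>{1..<np}. lj j * ind e (Yj j)) | Pi \<Rightarrow> \<pi> | Rho e \<Rightarrow> \<rho> e)" for w
  have yv: "g (Yv e) = (\<Sum>Y\<in>Q. lam Y * ind e Y)" for e unfolding g_def using shift by simp
  have pcs: "pathC V A s t n (\<lambda>i v. g (U p i v)) (\<lambda>i e. g (Ar p i e)) (\<lambda>e. g (Z p e))" for p
  proof -
    have "(\<lambda>e. g (Z p e)) = (\<lambda>e. if e \<in> pth p then 1 else 0)" unfolding g_def ind_def by auto
    moreover have "(\<lambda>i v. g (U p i v)) = fst (PU p)" "(\<lambda>i e. g (Ar p i e)) = snd (PU p)" unfolding g_def by auto
    ultimately show ?thesis using PUc[of p] by simp
  qed
  have nbj: "nbval g j \<le> real k" if j: "j \<in> {1..<np}" for j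
  proof -
    have "nbval g j = (case nb of Incl \<Rightarrow> (\<Sum>e\<in>A. ind e (Yj j) - ind e Xs * ind e (Yj j))
        | Excl \<Rightarrow> (\<Sum>e\<in>A. ind e Xs - ind e Xs * ind e (Yj j))
        | Sym \<Rightarrow> (\<Sum>e\<in>A. ind e Xs + ind e (Yj j) - 2 * (ind e Xs * ind e (Yj j))))"
      unfolding nbval_def g_def pth_def using j by (cases nb) auto
    moreover have "Yj j \<in> Nbh nb A s t Xs k" using YjN unfolding \<Phi>_def by auto
    ultimately show ?thesis using nb_ind[OF XsA, of "Yj j"] YjN Nbh_sub unfolding \<Phi>_def by auto
  qed
  have ind01: "ind e Y = 0 \<or> ind e Y = 1" for e and Y :: "arc set" by (simp add: ind_def)
  have rec: "recC g"
    unfolding recC_def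
  proof (intro conjI ballI)
    fix j e assume j: "j \<in> {1..<np}" and e: "e \<in> A"
    have gz: "g (Z 0 e) = ind e Xs" "g (Z j e) = ind e (Yj j)" "g (R j e) = ind e Xs * ind e (Yj j)"
      "g (Qv j e) = lj j * ind e (Yj j)" "g (L j) = lj j" using j unfolding g_def pth_def by auto
    show "g (R j e) \<le> g (Z 0 e)" "g (R j e) \<le> g (Z j e)" "g (Z 0 e) + g (Z j e) - 1 \<le> g (R j e)" "0 \<le> g (R j e)"
      unfolding gz by (simp_all add: ind_def)
    show "g (Qv j e) \<le> g (L j)" "g (Qv j e) \<le> g (Z j e)" "g (L j) + g (Z j e) - 1 \<le> g (Qv j e)" "0 \<le> g (Qv j e)"
      unfolding gz using lj01[of j] by (auto simp: ind_def)
  next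
    fix j assume "j \<in> {1..<np}" then show "nbval g j \<le> real k" by (rule nbj)
  next
    fix j assume "j \<in> {1..<np}" then show "0 \<le> g (L j)" using lj01 unfolding g_def by simp
  next
    show "(\<Sum>j\<in>{1..<np}. g (L j)) = 1" using shift[of "\<lambda>_. 1"] Q(4) unfolding g_def by simp
  next
    fix e assume "e \<in> A" then show "g (Yv e) = (\<Sum>j\<in>{1..<np}. g (Qv j e))" unfolding g_def by simp
  next
    show "0 \<le> g Pi" using Q(5) unfolding g_def by simp
  next
    fix e assume "e \<in> A" then show "0 \<le> g (Rho e)" using Q(6) unfolding g_def by simp
  next
    fix e assume "e \<in> A" then show "g (Yv e) \<le> g Pi + g (Rho e)" using Q(7) yv unfolding g_def by simp
  qed
  have sem: "semC g" unfolding semC_def using pcs rec by blast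
  have "objG C ch D G g = (\<Sum>e\<in>Xs. C e) + ((\<Sum>e\<in>A. ch e * (\<Sum>Y\<in>Q. lam Y * ind e Y)) + G * \<pi> + (\<Sum>e\<in>A. D e * \<rho> e))"
  proof -
    have "(\<Sum>e\<in>A. C e * g (Z 0 e)) = (\<Sum>e\<in>A. ind e Xs * C e)" unfolding g_def pth_def by (simp add: mult.commute)
    then have "(\<Sum>e\<in>A. C e * g (Z 0 e)) = (\<Sum>e\<in>Xs. C e)" using sum_ind[OF fA XsA] by simp
    then show ?thesis unfolding objG_def using yv by (simp add: g_def)
  qed
  also have "\<dots> \<le> (\<Sum>e\<in>Xs. C e) + (SUP c\<in>Ucont A ch D G. mval c \<Phi>)" using Q(8) by simp
  also have "\<dots> = rr_obj nb A s t k C ch D G Xs" unfolding rr_obj_def \<Phi>_def mval_def by simp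
  finally show ?thesis using sem Xopt by auto
qed


lemma len_pathCL: "length (pathCL p) = 2*n*n + 4*(n-1)*m + 4*m + n + (n-1) + 1 + n + 1 + (n-1) + (n-1)*n"
  unfolding pathCL_def by (simp add: len leE_def eqE_def sumU_def length_concat comp_def sum_list_triv)

lemma len_recCL: "length recCL = 8*((m+1)*m) + (m+1) + (m+1) + 2 + 2*m + 1 + m + m"
  unfolding recCL_def by (simp add: len leE_def eqE_def length_concat comp_def sum_list_triv case_prod_beta)


lemma len_CL: "length CL = np * (2*n*n + 4*(n-1)*m + 4*m + n + (n-1) + 1 + n + 1 + (n-1) + (n-1)*n) + (8*((m+1)*m) + (m+1) + (m+1) + 2 + 2*m + 1 + m + m)"
proof -
  have "length (concat (map pathCL PL)) = sum_list (map (\<lambda>p. 2*n*n + 4*(n-1)*m + 4*m + n + (n-1) + 1 + n + 1 + (n-1) + (n-1)*n) PL)"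
    by (simp add: length_concat comp_def len_pathCL)
  also have "\<dots> = np * (2*n*n + 4*(n-1)*m + 4*m + n + (n-1) + 1 + n + 1 + (n-1) + (n-1)*n)"
    by (simp add: sum_list_triv len)
  finally show ?thesis unfolding CL_def by (simp add: len_recCL)
qed

lemma poly_bound: "(m+2) * (2*n*n + 4*n*m + 4*m + n + n + 1 + n + 1 + n + n*n) + (8*((m+1)*m) + (m+1) + (m+1) + 2 + 2*m + 1 + m + m)
   + ((m+2) * n * n + (m+2) * n * m + (m+2) * m + (m+1) * m + (m+1) + (m+1) * m + m + 1 + m) \<le> 1000 * (n + m + 1)^3"
  by (simp add: power3_eq_cube algebra_simps)

lemma size_bound: "template_size T \<le> 1000 * (card V + card A + 1)^3"
proof -
  have a: "length CL \<le> (m+2) * (2*n*n + 4*n*m + 4*m + n + n + 1 + n + 1 + n + n*n) + (8*((m+1)*m) + (m+1) + (m+1) + 2 + 2*m + 1 + m + m)"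
    unfolding len_CL np_def by (intro add_mono mult_le_mono order_refl) auto
  have b: "length vlist \<le> (m+2) * n * n + (m+2) * n * m + (m+2) * m + (m+1) * m + (m+1) + (m+1) * m + m + 1 + m"
    unfolding len_vlist np_def by (intro add_mono mult_le_mono order_refl) auto
  show ?thesis unfolding size_T n_def[symmetric] m_def[symmetric] using a b poly_bound by linarith
qed


lemma opt_le: "X \<in> Paths A s t \<Longrightarrow> rr_opt nb A s t k C ch D G \<le> rr_obj nb A s t k C ch D G X"
  unfolding rr_opt_def using finite_Paths by (intro Min_le) auto

lemma main_inst:
  assumes nn: "\<forall>e\<in>A. 0 \<le> C e \<and> 0 \<le> ch e \<and> 0 \<le> D e" and G0: "0 \<le> G"
  shows "let M = instantiate A T C ch D G in
             (\<exists>x. mip_optimal M x) \<and>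
             (\<forall>x. mip_optimal M x \<longrightarrow>
                 mip_val M x = rr_opt nb A s t k C ch D G \<and>
                 read_path A T x \<in> Paths A s t \<and>
                 rr_obj nb A s t k C ch D G (read_path A T x) = rr_opt nb A s t k C ch D G)"
proof -
  define M where "M = instantiate A T C ch D G"
  define opt where "opt = rr_opt nb A s t k C ch D G"
  have lb: "opt \<le> mip_val M y \<and> read_path A T y \<in> Paths A s t \<and> rr_obj nb A s t k C ch D G (read_path A T y) \<le> mip_val M y"
    if fy: "mip_feasible M y" for y
  proof -
    have "semC (\<lambda>w. y (idx w))" using fy feas_bridge feasG_iff unfolding M_def by blast
    from lower[OF this nn G0] have l: "read_path A T y \<in> Paths A s t" "rr_obj nb A s t k C ch D G (read_path A T y) \<le> mip_val M y"
      unfolding read_bridge M_def val_bridge by auto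
    have "opt \<le> mip_val M y" unfolding opt_def using order_trans[OF opt_le[OF l(1)] l(2)] .
    then show ?thesis using l by auto
  qed
  obtain g0 where g0: "semC g0" "objG C ch D G g0 \<le> opt" using upper[OF nn G0] unfolding opt_def by blast
  define x0 where "x0 i = g0 (vlist ! i)" for i
  have ag: "\<forall>w\<in>set vlist. (\<lambda>w. x0 (idx w)) w = g0 w" unfolding x0_def using realize[of g0] by simp
  have fx0: "mip_feasible M x0" unfolding M_def feas_bridge using feasG_cong[OF ag] feasG_iff g0(1) by simp
  have vx0: "mip_val M x0 \<le> opt" unfolding M_def val_bridge using objG_cong[OF ag] g0(2) by simp
  have ox0: "mip_optimal M x0" unfolding mip_optimal_def using fx0 vx0 lb by force
  have "\<forall>x. mip_optimal M x \<longrightarrow> mip_val M x = opt \<and> read_path A T x \<in> Paths A s t \<and>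
                 rr_obj nb A s t k C ch D G (read_path A T x) = opt"
  proof (intro allI impI)
    fix x assume ox: "mip_optimal M x"
    then have fx: "mip_feasible M x" and le: "mip_val M x \<le> mip_val M x0" unfolding mip_optimal_def using fx0 by auto
    have l: "opt \<le> mip_val M x" "read_path A T x \<in> Paths A s t" "rr_obj nb A s t k C ch D G (read_path A T x) \<le> mip_val M x"
      using lb[OF fx] by auto
    have eq: "mip_val M x = opt" using l(1) le vx0 by linarith
    have "opt \<le> rr_obj nb A s t k C ch D G (read_path A T x)" using opt_le[OF l(2)] unfolding opt_def .
    then show "mip_val M x = opt \<and> read_path A T x \<in> Paths A s t \<and> rr_obj nb A s t k C ch D G (read_path A T x) = opt"
      using eq l by linarith
  qed
  then show ?thesis using ox0 unfolding M_def opt_def Let_def by blast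
qed

end

theorem mainTheorem15:
  "\<exists>(c::nat) (d::nat). \<forall>(V::nat set) (A::arc set) (s::nat) (t::nat) (k::nat) (nb::nbh).
     finite V \<and> A \<subseteq> V \<times> V \<and> s \<in> V \<and> t \<in> V \<and> s \<noteq> t \<and> Paths A s t \<noteq> {} \<longrightarrow>
     (\<exists>T. template_size T \<le> c * (card V + card A + 1) ^ d \<and> template_wf A T \<and>
       (\<forall>C ch D G. (\<forall>e\<in>A. 0 \<le> C e \<and> 0 \<le> ch e \<and> 0 \<le> D e) \<and> 0 \<le> G \<longrightarrow>
          (let M = instantiate A T C ch D G in
             (\<exists>x. mip_optimal M x) \<and>
             (\<forall>x. mip_optimal M x \<longrightarrow>
                 mip_val M x = rr_opt nb A s t k C ch D G \<and>
                 read_path A T x \<in> Paths A s t \<and>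
                 rr_obj nb A s t k C ch D G (read_path A T x) = rr_opt nb A s t k C ch D G))))"
proof (rule exI[of _ 1000], rule exI[of _ 3], intro allI impI)
  fix V :: "nat set" and A :: "arc set" and s t k :: nat and nb :: nbh
  assume H: "finite V \<and> A \<subseteq> V \<times> V \<and> s \<in> V \<and> t \<in> V \<and> s \<noteq> t \<and> Paths A s t \<noteq> {}"
  interpret I: inst V A s t k nb using H by unfold_locales auto
  show "\<exists>T. template_size T \<le> 1000 * (card V + card A + 1) ^ 3 \<and> template_wf A T \<and>
       (\<forall>C ch D G. (\<forall>e\<in>A. 0 \<le> C e \<and> 0 \<le> ch e \<and> 0 \<le> D e) \<and> 0 \<le> G \<longrightarrow>
          (let M = instantiate A T C ch D G in
             (\<exists>x. mip_optimal M x) \<and>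
             (\<forall>x. mip_optimal M x \<longrightarrow>
                 mip_val M x = rr_opt nb A s t k C ch D G \<and>
                 read_path A T x \<in> Paths A s t \<and>
                 rr_obj nb A s t k C ch D G (read_path A T x) = rr_opt nb A s t k C ch D G)))"
    using I.size_bound I.T_wf I.main_inst by blast
qed


end
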